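(* If $0\to(M,\alpha_M)\to(K,\alpha_K)\xrightarrow{\pi}(L,\alpha_L)\to0$ is a universal $\alpha$-central extension of Hom-Leibniz $n$-algebras, then ${}_nHL_0^\alpha(K)={}_nHL_1^\alpha(K)=0$.
   Context: Fix a field $\mathbb K$ and $n\ge2$. A (multiplicative) Hom-Leibniz $n$-algebra is a $\mathbb K$-vector space $L$ with an $n$-linear bracket and a linear map $\alpha_L$ preserving the bracket, satisfying $[[x_1,\dots,x_n],\alpha_L(y_1),\dots,\alpha_L(y_{n-1})]=\sum_{i=1}^n[\alpha_L(x_1),\dots,[x_i,y_1,\dots,y_{n-1}],\dots,\alpha_L(x_n)]$. Homomorphisms preserve brackets and commute with twisting maps. Center $Z(K)$: elements $x$ with every bracket having $x$ in some position equal to $0$. An extension of $L$ is a surjective homomorphism $\pi:K\to L$ with kernel $M$; central if $M\subseteq Z(K)$; $\alpha$-central if every bracket with $n-1$ entries in $\alpha_K(M)$ and the remaining entry (any position) in $K$ vanishes. A central extension $\pi$ is universal $\alpha$-central if for every $\alpha$-central extension $\pi':K'\to L$ there is a unique homomorphism $h:K\to K'$ with $\pi'\circ h=\pi$. For a Hom-Leibniz $n$-algebra $(K,\alpha_K)$ define $\delta_1:K^{\otimes n}\to K$, $\delta_1(x_1\otimes\dots\otimes x_n)=[x_1,\dots,x_n]$, and $\delta_2:K^{\otimes(2n-1)}\to K^{\otimes n}$, $\delta_2(x_1\otimes\dots\otimes x_n\otimes y_1\otimes\dots\otimes y_{n-1})=[x_1,\dots,x_n]\otimes\alpha_K(y_1)\otimes\dots\otimes\alpha_K(y_{n-1})-\sum_{i=1}^n\alpha_K(x_1)\otimes\dots\otimes[x_i,y_1,\dots,y_{n-1}]\otimes\dots\otimes\alpha_K(x_n)$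 (in the $i$-th term all factors other than the $i$-th are $\alpha_K(x_j)$). Then ${}_nHL_0^\alpha(K)=K/[K,\dots,K]$ and ${}_nHL_1^\alpha(K)=\ker\delta_1/\operatorname{im}\delta_2$. *)

theory Defs
  imports Main
begin

record ('k, 'a) hom_nalg =
  carrier :: "'a set"
  add :: "'a \<Rightarrow> 'a \<Rightarrow> 'a"
  zero :: "'a"
  smult :: "'k \<Rightarrow> 'a \<Rightarrow> 'a"
  brk :: "'a list \<Rightarrow> 'a"
  tw :: "'a \<Rightarrow> 'a"

definition vspace :: "('k::field, 'a) hom_nalg \<Rightarrow> bool" where
  "vspace V \<longleftrightarrow>
     zero V \<in> carrier V \<and>
     (\<forall>x\<in>carrier V. \<forall>y\<in>carrier V. add V x y \<in> carrier V) \<and>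
     (\<forall>c. \<forall>x\<in>carrier V. smult V c x \<in> carrier V) \<and>
     (\<forall>x\<in>carrier V. \<forall>y\<in>carrier V. \<forall>z\<in>carrier V. add V (add V x y) z = add V x (add V y z)) \<and>
     (\<forall>x\<in>carrier V. \<forall>y\<in>carrier V. add V x y = add V y x) \<and>
     (\<forall>x\<in>carrier V. add V (zero V) x = x) \<and>
     (\<forall>x\<in>carrier V. \<exists>y\<in>carrier V. add V x y = zero V) \<and>
     (\<forall>c. \<forall>x\<in>carrier V. \<forall>y\<in>carrier V. smult V c (add V x y) = add V (smult V c x) (smult V c y)) \<and>
     (\<forall>a b. \<forall>x\<in>carrier V. smult V (a + b) x = add V (smult V a x) (smult V b x)) \<and>
     (\<forall>a b. \<forall>x\<in>carrier V. smult V (a * b) x = smult V a (smult V b x)) \<and>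
     (\<forall>x\<in>carrier V. smult V 1 x = x)"

definition tuples :: "nat \<Rightarrow> 'a set \<Rightarrow> 'a list set" where
  "tuples m A = {xs. length xs = m \<and> set xs \<subseteq> A}"

definition lsum :: "('k, 'a) hom_nalg \<Rightarrow> 'a list \<Rightarrow> 'a" where
  "lsum V xs = foldr (add V) xs (zero V)"

definition hom_leibniz_nalg :: "nat \<Rightarrow> ('k::field, 'a) hom_nalg \<Rightarrow> bool" where
  "hom_leibniz_nalg n V \<longleftrightarrow>
     vspace V \<and>
     \<comment> \<open>the bracket is n-linear\<close>
     (\<forall>xs\<in>tuples n (carrier V). brk V xs \<in> carrier V) \<and>
     (\<forall>xs\<in>tuples n (carrier V). \<forall>i<n. \<forall>a\<in>carrier V. \<forall>b\<in>carrier V.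
        brk V (xs[i := add V a b]) = add V (brk V (xs[i := a])) (brk V (xs[i := b]))) \<and>
     (\<forall>xs\<in>tuples n (carrier V). \<forall>i<n. \<forall>c. \<forall>a\<in>carrier V.
        brk V (xs[i := smult V c a]) = smult V c (brk V (xs[i := a]))) \<and>
     \<comment> \<open>the twisting map is linear and multiplicative\<close>
     (\<forall>x\<in>carrier V. tw V x \<in> carrier V) \<and>
     (\<forall>x\<in>carrier V. \<forall>y\<in>carrier V. tw V (add V x y) = add V (tw V x) (tw V y)) \<and>
     (\<forall>c. \<forall>x\<in>carrier V. tw V (smult V c x) = smult V c (tw V x)) \<and>
     (\<forall>xs\<in>tuples n (carrier V). tw V (brk V xs) = brk V (map (tw V) xs)) \<and>
     \<comment> \<open>the Hom-Leibniz n-identity\<close>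
     (\<forall>xs\<in>tuples n (carrier V). \<forall>ys\<in>tuples (n - 1) (carrier V).
        brk V (brk V xs # map (tw V) ys) =
        lsum V (map (\<lambda>i. brk V ((map (tw V) xs)[i := brk V (xs ! i # ys)])) [0..<n]))"

definition hom :: "nat \<Rightarrow> ('k::field, 'a) hom_nalg \<Rightarrow> ('k, 'b) hom_nalg \<Rightarrow> ('a \<Rightarrow> 'b) \<Rightarrow> bool" where
  "hom n V W f \<longleftrightarrow>
     (\<forall>x\<in>carrier V. f x \<in> carrier W) \<and>
     (\<forall>x\<in>carrier V. \<forall>y\<in>carrier V. f (add V x y) = add W (f x) (f y)) \<and>
     (\<forall>c. \<forall>x\<in>carrier V. f (smult V c x) = smult W c (f x)) \<and>
     (\<forall>xs\<in>tuples n (carrier V). f (brk V xs) = brk W (map f xs)) \<and>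
     (\<forall>x\<in>carrier V. f (tw V x) = tw W (f x))"

definition extension :: "nat \<Rightarrow> ('k::field, 'a) hom_nalg \<Rightarrow> ('k, 'b) hom_nalg \<Rightarrow> ('a \<Rightarrow> 'b) \<Rightarrow> bool" where
  "extension n K L \<pi> \<longleftrightarrow>
     hom_leibniz_nalg n K \<and> hom_leibniz_nalg n L \<and> hom n K L \<pi> \<and> \<pi> ` carrier K = carrier L"

definition kernel :: "('k, 'a) hom_nalg \<Rightarrow> ('k, 'b) hom_nalg \<Rightarrow> ('a \<Rightarrow> 'b) \<Rightarrow> 'a set" where
  "kernel K L \<pi> = {x \<in> carrier K. \<pi> x = zero L}"

definition center :: "nat \<Rightarrow> ('k, 'a) hom_nalg \<Rightarrow> 'a set" where
  "center n K = {x \<in> carrier K. \<forall>xs\<in>tuples n (carrier K). \<forall>i<n. brk K (xs[i := x]) = zero K}"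

definition central_extension :: "nat \<Rightarrow> ('k::field, 'a) hom_nalg \<Rightarrow> ('k, 'b) hom_nalg \<Rightarrow> ('a \<Rightarrow> 'b) \<Rightarrow> bool" where
  "central_extension n K L \<pi> \<longleftrightarrow> extension n K L \<pi> \<and> kernel K L \<pi> \<subseteq> center n K"

definition alpha_central_extension :: "nat \<Rightarrow> ('k::field, 'a) hom_nalg \<Rightarrow> ('k, 'b) hom_nalg \<Rightarrow> ('a \<Rightarrow> 'b) \<Rightarrow> bool" where
  "alpha_central_extension n K L \<pi> \<longleftrightarrow> extension n K L \<pi> \<and>
     (\<forall>xs i. length xs = n \<and> i < n \<and> xs ! i \<in> carrier K \<and>
        (\<forall>j<n. j \<noteq> i \<longrightarrow> xs ! j \<in> tw K ` kernel K L \<pi>) \<longrightarrow> brk K xs = zero K)"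

text \<open>Since HOL cannot quantify over types inside a
formula, the competing alpha-central extensions K' range over all structures whose
carrier lives in the (large) type (a list => k) set.
Uniqueness of h is uniqueness as a map on the carrier of K.\<close>
definition universal_alpha_central_extension ::
  "nat \<Rightarrow> ('k::field, 'a) hom_nalg \<Rightarrow> ('k, 'b) hom_nalg \<Rightarrow> ('a \<Rightarrow> 'b) \<Rightarrow> bool" where
  "universal_alpha_central_extension n K L \<pi> \<longleftrightarrow> central_extension n K L \<pi> \<and>
     (\<forall>(K' :: ('k, ('a list \<Rightarrow> 'k) set) hom_nalg) \<pi>'. alpha_central_extension n K' L \<pi>' \<longrightarrow>
        (\<exists>h. hom n K K' h \<and> (\<forall>x\<in>carrier K. \<pi>' (h x) = \<pi> x) \<and>
           (\<forall>h'. hom n K K' h' \<and> (\<forall>x\<in>carrier K. \<pi>' (h' x) = \<pi> x) \<longrightarrow>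
                 (\<forall>x\<in>carrier K. h' x = h x))))"

inductive_set vspan :: "('k, 'a) hom_nalg \<Rightarrow> 'a set \<Rightarrow> 'a set" for V S where
  zero: "zero V \<in> vspan V S"
| gen: "x \<in> S \<Longrightarrow> x \<in> vspan V S"
| add: "x \<in> vspan V S \<Longrightarrow> y \<in> vspan V S \<Longrightarrow> add V x y \<in> vspan V S"
| smult: "x \<in> vspan V S \<Longrightarrow> smult V c x \<in> vspan V S"

definition derived :: "nat \<Rightarrow> ('k, 'a) hom_nalg \<Rightarrow> 'a set" where
  "derived n K = vspan K (brk K ` tuples n (carrier K))"

text \<open>nHL_0(K) = K/[K,...,K] is zero.\<close>
definition HL0_zero :: "nat \<Rightarrow> ('k, 'a) hom_nalg \<Rightarrow> bool" where
  "HL0_zero n K \<longleftrightarrow> carrier K \<subseteq> derived n K"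

text \<open>K^{\<otimes>m} is realised as the free vector space on m-tuples of elements
of K (finitely supported functions 'a list \<Rightarrow> 'k) modulo the subspace spanned by the
multilinearity relations. Elements of the free space are written as formal combinations
given by lists of (coefficient, tuple) pairs.\<close>

inductive_set fspan :: "('x \<Rightarrow> 'k::field) set \<Rightarrow> ('x \<Rightarrow> 'k) set" for S where
  zero: "(\<lambda>_. 0) \<in> fspan S"
| gen: "f \<in> S \<Longrightarrow> f \<in> fspan S"
| add: "f \<in> fspan S \<Longrightarrow> g \<in> fspan S \<Longrightarrow> (\<lambda>t. f t + g t) \<in> fspan S"
| smult: "f \<in> fspan S \<Longrightarrow> (\<lambda>t. c * f t) \<in> fspan S"

definition ind :: "'x \<Rightarrow> 'x \<Rightarrow> 'k::field" where
  "ind t = (\<lambda>s. if s = t then 1 else 0)"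

definition formal :: "('k::field \<times> 'x) list \<Rightarrow> 'x \<Rightarrow> 'k" where
  "formal ps = (\<lambda>s. sum_list (map (\<lambda>(c, t). c * ind t s) ps))"

definition tensor_rels :: "nat \<Rightarrow> ('k::field, 'a) hom_nalg \<Rightarrow> ('a list \<Rightarrow> 'k) set" where
  "tensor_rels m K =
     {(\<lambda>s. ind (xs[i := add K a b]) s - ind (xs[i := a]) s - ind (xs[i := b]) s) | xs i a b.
        xs \<in> tuples m (carrier K) \<and> i < m \<and> a \<in> carrier K \<and> b \<in> carrier K} \<union>
     {(\<lambda>s. ind (xs[i := smult K c a]) s - c * ind (xs[i := a]) s) | xs i c a.
        xs \<in> tuples m (carrier K) \<and> i < m \<and> a \<in> carrier K}"

text \<open>delta_2 applied to the pure tensor x_1 \<otimes> ... \<otimes> x_n \<otimes> y_1 \<otimes> ... \<otimes> y_(n-1),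
as an element of the free space on n-tuples.\<close>
definition delta2_pure :: "nat \<Rightarrow> ('k::field, 'a) hom_nalg \<Rightarrow> 'a list \<Rightarrow> 'a list \<Rightarrow> 'a list \<Rightarrow> 'k" where
  "delta2_pure n K xs ys =
     (\<lambda>s. ind (brk K xs # map (tw K) ys) s
          - (\<Sum>i<n. ind ((map (tw K) xs)[i := brk K (xs ! i # ys)]) s))"

definition delta2_image :: "nat \<Rightarrow> ('k::field, 'a) hom_nalg \<Rightarrow> ('a list \<Rightarrow> 'k) set" where
  "delta2_image n K =
     {delta2_pure n K xs ys | xs ys. xs \<in> tuples n (carrier K) \<and> ys \<in> tuples (n - 1) (carrier K)}"

definition delta1 :: "('k, 'a) hom_nalg \<Rightarrow> ('k \<times> 'a list) list \<Rightarrow> 'a" where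
  "delta1 K ps = lsum K (map (\<lambda>(c, t). smult K c (brk K t)) ps)"

text \<open>nHL_1(K) = ker delta_1 / im delta_2 is zero: every element of K^{\<otimes>n} in the kernel of
delta_1 lies in the image of delta_2, i.e. any representing formal combination lies in the
span of the delta_2-images of pure tensors plus the multilinearity relations.\<close>
definition HL1_zero :: "nat \<Rightarrow> ('k::field, 'a) hom_nalg \<Rightarrow> bool" where
  "HL1_zero n K \<longleftrightarrow>
     (\<forall>ps. (\<forall>(c, t)\<in>set ps. t \<in> tuples n (carrier K)) \<and> delta1 K ps = zero K \<longrightarrow>
        formal ps \<in> fspan (delta2_image n K \<union> tensor_rels n K))"

end

theory Submission
  imports Defs
begin


definition vneg :: "('k::field, 'a) hom_nalg \<Rightarrow> 'a \<Rightarrow> 'a" where "vneg V x = smult V (-1) x"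

context
  fixes V :: "('k::field, 'a) hom_nalg"
  assumes V: "vspace V"
begin

lemma vs_zero[simp]: "zero V \<in> carrier V" using V unfolding vspace_def by auto
lemma vs_add[simp]: "x \<in> carrier V \<Longrightarrow> y \<in> carrier V \<Longrightarrow> add V x y \<in> carrier V"
  using V unfolding vspace_def by auto
lemma vs_smult[simp]: "x \<in> carrier V \<Longrightarrow> smult V c x \<in> carrier V"
  using V unfolding vspace_def by auto
lemma vs_assoc: "x \<in> carrier V \<Longrightarrow> y \<in> carrier V \<Longrightarrow> z \<in> carrier V \<Longrightarrow>
   add V (add V x y) z = add V x (add V y z)"
  using V unfolding vspace_def by auto
lemma vs_comm: "x \<in> carrier V \<Longrightarrow> y \<in> carrier V \<Longrightarrow> add V x y = add V y x"
  using V unfolding vspace_def by auto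
lemma vs_lcomm: "x \<in> carrier V \<Longrightarrow> y \<in> carrier V \<Longrightarrow> z \<in> carrier V \<Longrightarrow>
   add V x (add V y z) = add V y (add V x z)"
  by (metis vs_assoc vs_comm)
lemma vs_zero_add[simp]: "x \<in> carrier V \<Longrightarrow> add V (zero V) x = x"
  using V unfolding vspace_def by auto
lemma vs_add_zero[simp]: "x \<in> carrier V \<Longrightarrow> add V x (zero V) = x"
  using vs_comm vs_zero_add vs_zero by metis
lemma vs_inv: "x \<in> carrier V \<Longrightarrow> \<exists>y\<in>carrier V. add V x y = zero V"
  using V unfolding vspace_def by (elim conjE) (erule bspec)
lemma vs_smult_add: "x \<in> carrier V \<Longrightarrow> y \<in> carrier V \<Longrightarrow>
  smult V c (add V x y) = add V (smult V c x) (smult V c y)"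
  using V unfolding vspace_def by auto
lemma vs_add_smult: "x \<in> carrier V \<Longrightarrow> smult V (a + b) x = add V (smult V a x) (smult V b x)"
  using V unfolding vspace_def by auto
lemma vs_smult_smult: "x \<in> carrier V \<Longrightarrow> smult V (a * b) x = smult V a (smult V b x)"
  using V unfolding vspace_def by auto
lemma vs_one[simp]: "x \<in> carrier V \<Longrightarrow> smult V 1 x = x"
  using V unfolding vspace_def by auto

lemma vs_cancel:
  assumes "x \<in> carrier V" "y \<in> carrier V" "z \<in> carrier V" "add V x y = add V x z"
  shows "y = z"
proof -
  obtain w where w: "w \<in> carrier V" "add V x w = zero V" using vs_inv assms(1) by blast
  have "add V (add V w x) y = add V (add V w x) z" using assms w by (simp add: vs_assoc)
  moreover have "add V w x = zero V" using w assms vs_comm by metis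
  ultimately show ?thesis using assms by simp
qed

lemma vs_smult_0[simp]: "x \<in> carrier V \<Longrightarrow> smult V 0 x = zero V"
proof -
  assume x: "x \<in> carrier V"
  have "add V (smult V 0 x) (smult V 0 x) = add V (smult V 0 x) (zero V)"
    using vs_add_smult[OF x, of 0 0] x by simp
  thus ?thesis using vs_cancel x by (meson vs_smult vs_zero)
qed

lemma vs_smult_zero[simp]: "smult V c (zero V) = zero V"
  by (metis mult_zero_right vs_smult_0 vs_smult_smult vs_zero)


lemma vs_neg[simp]: "x \<in> carrier V \<Longrightarrow> vneg V x \<in> carrier V" by (simp add: vneg_def)
lemma vs_add_neg[simp]: "x \<in> carrier V \<Longrightarrow> add V x (vneg V x) = zero V"
  unfolding vneg_def by (metis add.right_inverse vs_add_smult vs_one vs_smult_0)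
lemma vs_neg_add[simp]: "x \<in> carrier V \<Longrightarrow> add V (vneg V x) x = zero V"
  using vs_comm vs_add_neg vs_neg by metis

lemma vs_add_neg_cancel: "x \<in> carrier V \<Longrightarrow> y \<in> carrier V \<Longrightarrow> add V (add V x y) (vneg V y) = x"
  by (simp add: vs_assoc)

lemma lsum_closed[simp]: "set xs \<subseteq> carrier V \<Longrightarrow> lsum V xs \<in> carrier V"
  by (induction xs) (auto simp: lsum_def)

lemma lsum_Nil[simp]: "lsum V [] = zero V" by (simp add: lsum_def)
lemma lsum_Cons[simp]: "lsum V (x # xs) = add V x (lsum V xs)" by (simp add: lsum_def)

lemma lsum_append: "set xs \<subseteq> carrier V \<Longrightarrow> set ys \<subseteq> carrier V \<Longrightarrow>
  lsum V (xs @ ys) = add V (lsum V xs) (lsum V ys)"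
  by (induction xs) (auto simp: vs_assoc)

lemma lsum_smult: "set xs \<subseteq> carrier V \<Longrightarrow> smult V c (lsum V xs) = lsum V (map (smult V c) xs)"
  by (induction xs) (auto simp: vs_smult_add)

lemma lsum_zeros: "(\<forall>x\<in>set xs. x = zero V) \<Longrightarrow> lsum V xs = zero V"
  by (induction xs) auto

end


definition subsp :: "('k::field, 'a) hom_nalg \<Rightarrow> 'a set \<Rightarrow> bool" where
  "subsp V S \<longleftrightarrow> S \<subseteq> carrier V \<and> zero V \<in> S \<and> (\<forall>x\<in>S. \<forall>y\<in>S. add V x y \<in> S)
     \<and> (\<forall>c. \<forall>x\<in>S. smult V c x \<in> S)"

definition qcl :: "('k, 'a) hom_nalg \<Rightarrow> 'a set \<Rightarrow> 'a \<Rightarrow> 'a set" where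
  "qcl V S x = add V x ` S"

definition qspace :: "('k, 'a) hom_nalg \<Rightarrow> 'a set \<Rightarrow> ('k, 'a set) hom_nalg" where
  "qspace V S = \<lparr>carrier = qcl V S ` carrier V,
     add = \<lambda>A B. {add V a b | a b. a \<in> A \<and> b \<in> B}, zero = S,
     smult = \<lambda>c A. {add V (smult V c a) s | a s. a \<in> A \<and> s \<in> S},
     brk = \<lambda>_. S, tw = \<lambda>A. A\<rparr>"

definition qmap :: "('k, 'a) hom_nalg \<Rightarrow> 'a set \<Rightarrow> ('a \<Rightarrow> 'a) \<Rightarrow> 'a set \<Rightarrow> 'a set" where
  "qmap V S f A = {add V (f a) s | a s. a \<in> A \<and> s \<in> S}"

lemma qspace_simps[simp]:
  "carrier (qspace V S) = qcl V S ` carrier V"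
  "zero (qspace V S) = S"
  "add (qspace V S) A B = {add V a b | a b. a \<in> A \<and> b \<in> B}"
  "smult (qspace V S) c A = {add V (smult V c a) s | a s. a \<in> A \<and> s \<in> S}"
  "brk (qspace V S) xs = S"
  by (simp_all add: qspace_def)

context
  fixes V :: "('k::field, 'a) hom_nalg" and S
  assumes V: "vspace V" and S: "subsp V S"
begin

lemma S_sub: "s \<in> S \<Longrightarrow> s \<in> carrier V" using S unfolding subsp_def by auto
lemma S_zero: "zero V \<in> S" using S unfolding subsp_def by auto
lemma S_add: "s \<in> S \<Longrightarrow> t \<in> S \<Longrightarrow> add V s t \<in> S" using S unfolding subsp_def by auto
lemma S_smult: "s \<in> S \<Longrightarrow> smult V c s \<in> S" using S unfolding subsp_def by auto

lemmas ac = vs_assoc[OF V] vs_comm[OF V] vs_lcomm[OF V]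

lemma mem_qcl: "s \<in> S \<Longrightarrow> add V x s \<in> qcl V S x" by (simp add: qcl_def)
lemma mem_qadd: "a \<in> A \<Longrightarrow> b \<in> B \<Longrightarrow> add V a b \<in> add (qspace V S) A B" by auto
lemma mem_qsmult: "a \<in> A \<Longrightarrow> s \<in> S \<Longrightarrow> add V (smult V c a) s \<in> smult (qspace V S) c A" by auto
lemma mem_qmap: "a \<in> A \<Longrightarrow> s \<in> S \<Longrightarrow> add V (f a) s \<in> qmap V S f A" unfolding qmap_def by auto

lemma qcl_add: "x \<in> carrier V \<Longrightarrow> y \<in> carrier V \<Longrightarrow>
  add (qspace V S) (qcl V S x) (qcl V S y) = qcl V S (add V x y)"
proof (rule set_eqI, rule iffI)
  fix z assume x: "x \<in> carrier V" and y: "y \<in> carrier V"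
  { assume "z \<in> add (qspace V S) (qcl V S x) (qcl V S y)"
    then obtain s t where st: "s \<in> S" "t \<in> S" "z = add V (add V x s) (add V y t)"
      by (auto simp: qcl_def)
    hence "z = add V (add V x y) (add V s t)" using x y S_sub V by (simp add: ac)
    thus "z \<in> qcl V S (add V x y)" using st S_add unfolding qcl_def by blast }
  { assume "z \<in> qcl V S (add V x y)"
    then obtain s where s: "s \<in> S" "z = add V (add V x y) s" by (auto simp: qcl_def)
    hence zz: "z = add V (add V x s) (add V y (zero V))" using x y S_sub[OF s(1)] V by (simp add: ac)
    show "z \<in> add (qspace V S) (qcl V S x) (qcl V S y)" unfolding zz by (rule mem_qadd[OF mem_qcl[OF s(1)] mem_qcl[OF S_zero]]) }
qed

lemma qcl_smult: "x \<in> carrier V \<Longrightarrow> smult (qspace V S) c (qcl V S x) = qcl V S (smult V c x)"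
proof (rule set_eqI, rule iffI)
  fix z assume x: "x \<in> carrier V"
  { assume "z \<in> smult (qspace V S) c (qcl V S x)"
    then obtain s t where st: "s \<in> S" "t \<in> S" "z = add V (smult V c (add V x s)) t"
      by (auto simp: qcl_def)
    hence "z = add V (smult V c x) (add V (smult V c s) t)" using x S_sub V
      by (simp add: ac vs_smult_add)
    thus "z \<in> qcl V S (smult V c x)" using st S_add S_smult unfolding qcl_def by blast }
  { assume "z \<in> qcl V S (smult V c x)"
    then obtain s where s: "s \<in> S" "z = add V (smult V c x) s" by (auto simp: qcl_def)
    hence zz: "z = add V (smult V c (add V x (zero V))) s" using x V by simp
    show "z \<in> smult (qspace V S) c (qcl V S x)" unfolding zz by (rule mem_qsmult[OF mem_qcl[OF S_zero] s(1)]) }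
qed

lemma qmap_cl:
  assumes f: "\<forall>x\<in>carrier V. f x \<in> carrier V" "\<forall>x\<in>carrier V. \<forall>y\<in>carrier V. f (add V x y) = add V (f x) (f y)"
    "\<forall>s\<in>S. f s \<in> S" and x: "x \<in> carrier V"
  shows "qmap V S f (qcl V S x) = qcl V S (f x)"
proof (rule set_eqI, rule iffI)
  fix z
  { assume "z \<in> qmap V S f (qcl V S x)"
    then obtain s t where st: "s \<in> S" "t \<in> S" "z = add V (f (add V x s)) t"
      by (auto simp: qcl_def qmap_def)
    hence "z = add V (f x) (add V (f s) t)" using x S_sub V f
      by (simp add: ac)
    thus "z \<in> qcl V S (f x)" using st S_add f unfolding qcl_def by blast }
  { assume "z \<in> qcl V S (f x)"
    then obtain s where s: "s \<in> S" "z = add V (f x) s" by (auto simp: qcl_def)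
    hence zz: "z = add V (f (add V x (zero V))) s" using x V by simp
    show "z \<in> qmap V S f (qcl V S x)" unfolding zz by (rule mem_qmap[OF mem_qcl[OF S_zero] s(1)]) }
qed

lemma qcl_zero: "qcl V S (zero V) = S"
  unfolding qcl_def using S_sub V by (auto simp: image_def)

lemma qcl_mem_self: "x \<in> carrier V \<Longrightarrow> x \<in> qcl V S x"
  unfolding qcl_def using S_zero V by (auto intro: image_eqI[where x="zero V"])

lemma qcl_eq: assumes xc: "x \<in> carrier V" and yc: "y \<in> carrier V"
  shows "qcl V S x = qcl V S y \<longleftrightarrow> (\<exists>s\<in>S. x = add V y s)"
proof
  assume "qcl V S x = qcl V S y"
  then have "x \<in> qcl V S y" using qcl_mem_self xc by blast
  thus "\<exists>s\<in>S. x = add V y s" unfolding qcl_def by auto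
next
  assume "\<exists>s\<in>S. x = add V y s"
  then obtain s where s: "s \<in> S" and xs: "x = add V y s" by blast
  have sc: "s \<in> carrier V" using S_sub s by blast
  have ns: "vneg V s \<in> S" using S_smult[OF s, of "-1"] by (simp add: vneg_def)
  show "qcl V S x = qcl V S y"
  proof (rule set_eqI, rule iffI)
    fix z assume "z \<in> qcl V S x"
    then obtain t where t: "t \<in> S" and zt: "z = add V x t" unfolding qcl_def by auto
    have tc: "t \<in> carrier V" using S_sub t by blast
    have zz: "z = add V y (add V s t)" unfolding zt xs using sc tc yc V by (simp add: vs_assoc[OF V])
    show "z \<in> qcl V S y" unfolding zz by (rule mem_qcl[OF S_add[OF s t]])
  next
    fix z assume "z \<in> qcl V S y"
    then obtain t where t: "t \<in> S" and zt: "z = add V y t" unfolding qcl_def by auto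
    have tc: "t \<in> carrier V" using S_sub t by blast
    have nsc: "vneg V s \<in> carrier V" using sc V by simp
    have "add V x (add V (vneg V s) t) = add V y (add V s (add V (vneg V s) t))"
      unfolding xs using sc tc yc nsc V by (simp add: vs_assoc[OF V])
    also have "\<dots> = add V y (add V (add V s (vneg V s)) t)"
      using sc tc nsc V by (simp only: vs_assoc[OF V])
    also have "\<dots> = z" using sc tc yc V zt by simp
    finally have zz: "z = add V x (add V (vneg V s) t)" ..
    show "z \<in> qcl V S x" unfolding zz by (rule mem_qcl[OF S_add[OF ns t]])
  qed
qed

lemma qcl_eq_zero: "x \<in> carrier V \<Longrightarrow> qcl V S x = S \<longleftrightarrow> x \<in> S"
  using qcl_eq[of x "zero V"] qcl_zero V S_sub by (auto simp: S_zero)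

lemma qspace_vspace: "vspace (qspace V S)"
proof -
  have Z: "S \<in> qcl V S ` carrier V" using qcl_zero V by (metis image_eqI vs_zero)
  show ?thesis unfolding vspace_def qspace_simps(1,2)
  proof (intro conjI ballI allI, goal_cases)
    case 1 show ?case using Z .
  next
    case (2 A B) then obtain x y where "x \<in> carrier V" "y \<in> carrier V" "A = qcl V S x" "B = qcl V S y" by blast
    thus ?case using qcl_add V by (simp del: qspace_simps) 
  next
    case (3 c A) then obtain x where "x \<in> carrier V" "A = qcl V S x" by blast
    thus ?case using qcl_smult V by (simp del: qspace_simps)
  next
    case (4 A B C) then obtain x y z where "x \<in> carrier V" "y \<in> carrier V" "z \<in> carrier V" "A = qcl V S x" "B = qcl V S y" "C = qcl V S z" by blast
    thus ?case using qcl_add V by (simp del: qspace_simps add: ac)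
  next
    case (5 A B) then obtain x y where "x \<in> carrier V" "y \<in> carrier V" "A = qcl V S x" "B = qcl V S y" by blast
    thus ?case using qcl_add V by (simp del: qspace_simps add: ac)
  next
    case (6 A) then obtain x where "x \<in> carrier V" "A = qcl V S x" by blast
    thus ?case using qcl_add V qcl_zero by (metis vs_zero vs_zero_add)
  next
    case (7 A) then obtain x where x: "x \<in> carrier V" "A = qcl V S x" by blast
    hence "add (qspace V S) A (qcl V S (vneg V x)) = S" using qcl_add V qcl_zero
      by (metis vs_add_neg vs_neg)
    thus ?case using x V by (intro bexI[where x="qcl V S (vneg V x)"]) auto
  next
    case (8 c A B) then obtain x y where "x \<in> carrier V" "y \<in> carrier V" "A = qcl V S x" "B = qcl V S y" by blast
    thus ?case using qcl_add qcl_smult V by (simp del: qspace_simps add: vs_smult_add)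
  next
    case (9 a b A) then obtain x where "x \<in> carrier V" "A = qcl V S x" by blast
    thus ?case using qcl_add qcl_smult V by (simp del: qspace_simps add: vs_add_smult)
  next
    case (10 a b A) then obtain x where "x \<in> carrier V" "A = qcl V S x" by blast
    thus ?case using qcl_add qcl_smult V by (simp del: qspace_simps add: vs_smult_smult)
  next
    case (11 A) then obtain x where "x \<in> carrier V" "A = qcl V S x" by blast
    thus ?case using qcl_smult V by (simp del: qspace_simps)
  qed
qed

end

definition prodV :: "('k, 'a) hom_nalg \<Rightarrow> ('k, 'b) hom_nalg \<Rightarrow> ('k, 'a \<times> 'b) hom_nalg" where
  "prodV V W = \<lparr>carrier = carrier V \<times> carrier W,
     add = \<lambda>x y. (add V (fst x) (fst y), add W (snd x) (snd y)), zero = (zero V, zero W),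
     smult = \<lambda>c x. (smult V c (fst x), smult W c (snd x)),
     brk = \<lambda>xs. (brk V (map fst xs), brk W (map snd xs)),
     tw = \<lambda>x. (tw V (fst x), tw W (snd x))\<rparr>"

lemma prodV_simps[simp]:
  "carrier (prodV V W) = carrier V \<times> carrier W"
  "add (prodV V W) x y = (add V (fst x) (fst y), add W (snd x) (snd y))"
  "zero (prodV V W) = (zero V, zero W)"
  "smult (prodV V W) c x = (smult V c (fst x), smult W c (snd x))"
  "brk (prodV V W) xs = (brk V (map fst xs), brk W (map snd xs))"
  "tw (prodV V W) x = (tw V (fst x), tw W (snd x))"
  by (simp_all add: prodV_def)

lemma lsum_prod: "lsum (prodV V W) xs = (lsum V (map fst xs), lsum W (map snd xs))"
  by (induction xs) (simp_all add: lsum_def)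

lemma lsum_cong: "add V = add W \<Longrightarrow> zero V = zero W \<Longrightarrow> lsum V = lsum W"
  unfolding lsum_def by (rule ext) simp

lemma upd_simps[simp]: "add (X\<lparr>carrier := C, brk := b, tw := t\<rparr>) = add X"
  "zero (X\<lparr>carrier := C, brk := b, tw := t\<rparr>) = zero X"
  "smult (X\<lparr>carrier := C, brk := b, tw := t\<rparr>) = smult X"
  "carrier (X\<lparr>carrier := C, brk := b, tw := t\<rparr>) = C"
  "brk (X\<lparr>carrier := C, brk := b, tw := t\<rparr>) = b"
  "tw (X\<lparr>carrier := C, brk := b, tw := t\<rparr>) = t"
  by simp_all

lemma lsum_upd: "lsum (X\<lparr>carrier := C, brk := b, tw := t\<rparr>) = lsum X"
  by (rule lsum_cong) simp_all

lemma prodV_vspace: assumes V: "vspace V" and W: "vspace W" shows "vspace (prodV V W)"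
  unfolding vspace_def prodV_simps
proof (intro conjI ballI allI, goal_cases)
  case 1 show ?case using V W by simp
next case (2 x y) thus ?case using V W by (auto simp: mem_Times_iff)
next case (3 c x) thus ?case using V W by (auto simp: mem_Times_iff)
next case (4 x y z) thus ?case using V W by (auto simp: mem_Times_iff vs_assoc)
next case (5 x y) thus ?case using V W by (auto simp: mem_Times_iff vs_comm[OF V, of "fst x"] vs_comm[OF W, of "snd x"])
next case (6 x) thus ?case using V W by (auto simp: mem_Times_iff)
next case (7 x) thus ?case using V W by (intro bexI[where x="(vneg V (fst x), vneg W (snd x))"]) (auto simp: mem_Times_iff)
next case (8 c x y) thus ?case using V W by (auto simp: mem_Times_iff vs_smult_add)
next case (9 a b x) thus ?case using V W by (auto simp: mem_Times_iff vs_add_smult)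
next case (10 a b x) thus ?case using V W by (auto simp: mem_Times_iff vs_smult_smult)
next case (11 x) thus ?case using V W by (auto simp: mem_Times_iff)
qed

lemma sub_vspace:
  assumes V: "vspace V" and C: "C \<subseteq> carrier V" "zero V \<in> C" "\<forall>x\<in>C. \<forall>y\<in>C. add V x y \<in> C"
     "\<forall>c. \<forall>x\<in>C. smult V c x \<in> C"
  shows "vspace (V\<lparr>carrier := C, brk := b, tw := t\<rparr>)"
  unfolding vspace_def upd_simps
proof (intro conjI ballI allI, goal_cases)
  case 1 show ?case using C by simp
next case (2 x y) thus ?case using C by simp
next case (3 c x) thus ?case using C by simp
next case (4 x y z) thus ?case using V C(1) by (simp add: subset_iff vs_assoc)
next case (5 x y) thus ?case using V C(1) by (simp add: subset_iff vs_comm[OF V, of x])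
next case (6 x) thus ?case using V C(1) by (simp add: subset_iff)
next case (7 x) 
  hence "add V x (smult V (-1) x) = zero V" using V C(1) vs_add_neg[OF V, of x] unfolding vneg_def by blast
  thus ?case using C 7 by blast
next case (8 c x y) thus ?case using V C(1) by (simp add: subset_iff vs_smult_add)
next case (9 a b x) thus ?case using V C(1) by (simp add: subset_iff vs_add_smult)
next case (10 a b x) thus ?case using V C(1) by (simp add: subset_iff vs_smult_smult)
next case (11 x) thus ?case using V C(1) by (simp add: subset_iff)
qed


definition supp :: "('x \<Rightarrow> 'k::field) \<Rightarrow> 'x set" where "supp g = {t. g t \<noteq> 0}"

definition Fsp :: "('k::field, 'x \<Rightarrow> 'k) hom_nalg" where
  "Fsp = \<lparr>carrier = {g. finite (supp g)}, add = \<lambda>f g t. f t + g t, zero = \<lambda>_. 0,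
     smult = \<lambda>c f t. c * f t, brk = \<lambda>_ _. 0, tw = id\<rparr>"

lemma Fsp_simps[simp]: "carrier Fsp = {g. finite (supp g)}" "add Fsp f g = (\<lambda>t. f t + g t)"
  "zero Fsp = (\<lambda>_. 0)" "smult Fsp c f = (\<lambda>t. c * f t)"
  by (simp_all add: Fsp_def)

lemma supp_add: "supp (\<lambda>t. f t + g t) \<subseteq> supp f \<union> supp g" unfolding supp_def by auto
lemma supp_smult: "supp (\<lambda>t. c * f t) \<subseteq> supp f" unfolding supp_def by auto
lemma supp_zero[simp]: "supp (\<lambda>_. 0) = {}" unfolding supp_def by auto
lemma finite_supp_add: "finite (supp f) \<Longrightarrow> finite (supp g) \<Longrightarrow> finite (supp (\<lambda>t. f t + g t))"
  by (rule finite_subset[OF supp_add]) simp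
lemma finite_supp_smult: "finite (supp f) \<Longrightarrow> finite (supp (\<lambda>t. c * f t))"
  by (rule finite_subset[OF supp_smult])
lemma supp_ind: "supp (ind t) = {t}" unfolding supp_def ind_def by auto

lemma Fsp_vspace: "vspace (Fsp :: ('k::field, 'x \<Rightarrow> 'k) hom_nalg)"
  unfolding vspace_def Fsp_simps
proof (intro conjI ballI allI, goal_cases)
  case (7 x)
  hence "finite (supp (\<lambda>t. (-1) * x t))" using finite_supp_smult by blast
  hence "finite (supp (\<lambda>t. - x t))" by simp
  thus ?case by (intro bexI[where x="\<lambda>t. - x t"]) auto
qed (auto simp: finite_supp_add finite_supp_smult algebra_simps)

lemma fspan_finite': "f \<in> fspan G \<Longrightarrow> (\<And>g. g \<in> G \<Longrightarrow> finite (supp g)) \<Longrightarrow> finite (supp f)"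
  by (induction rule: fspan.induct) (auto simp: finite_supp_add finite_supp_smult)
lemma fspan_finite: "(\<And>g. g \<in> G \<Longrightarrow> finite (supp g)) \<Longrightarrow> f \<in> fspan G \<Longrightarrow> finite (supp f)"
  using fspan_finite' by blast

lemma fspan_subsp: "(\<And>g. g \<in> G \<Longrightarrow> finite (supp g)) \<Longrightarrow> subsp Fsp (fspan G)"
  unfolding subsp_def using fspan_finite by (auto intro: fspan.intros)

lemma fspan_neg: "f \<in> fspan G \<Longrightarrow> (\<lambda>t. - f t) \<in> fspan G"
  using fspan.smult[of f G "-1"] by simp

lemma fspan_diff: assumes "f \<in> fspan G" "g \<in> fspan G" shows "(\<lambda>t. f t - g t) \<in> fspan G"
proof -
  have "(\<lambda>t. f t + - g t) \<in> fspan G" by (rule fspan.add[OF assms(1) fspan_neg[OF assms(2)]])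
  thus ?thesis by simp
qed

lemma fspan_sum: "finite I \<Longrightarrow> (\<And>i. i \<in> I \<Longrightarrow> f i \<in> fspan G) \<Longrightarrow> (\<lambda>t. \<Sum>i\<in>I. f i t) \<in> fspan G"
proof (induction I rule: finite_induct)
  case empty thus ?case by (simp add: fspan.zero)
next
  case (insert x F) thus ?case using fspan.add[of "f x" G "\<lambda>t. \<Sum>i\<in>F. f i t"] by simp
qed

lemma fspan_eq: "f \<in> fspan G \<Longrightarrow> f = g \<Longrightarrow> g \<in> fspan G" by simp

definition push :: "('x \<Rightarrow> 'y) \<Rightarrow> ('x \<Rightarrow> 'k::comm_ring_1) \<Rightarrow> 'y \<Rightarrow> 'k" where
  "push f g = (\<lambda>s. \<Sum>t\<in>{t. g t \<noteq> 0 \<and> f t = s}. g t)"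

lemma push_sup: assumes "finite A" "supp g \<subseteq> A"
  shows "push f g s = (\<Sum>t\<in>{t\<in>A. f t = s}. g t)"
  unfolding push_def
  by (rule sum.mono_neutral_left) (use assms in \<open>auto simp: supp_def\<close>)

lemma push_add: assumes "finite (supp g)" "finite (supp h)"
  shows "push f (\<lambda>t. g t + h t) = (\<lambda>s. push f g s + push f h s)"
proof
  fix s
  let ?A = "supp g \<union> supp h"
  have "push f (\<lambda>t. g t + h t) s = (\<Sum>t\<in>{t\<in>?A. f t = s}. g t + h t)"
    by (rule push_sup) (simp_all add: assms supp_add)
  also have "\<dots> = (\<Sum>t\<in>{t\<in>?A. f t = s}. g t) + (\<Sum>t\<in>{t\<in>?A. f t = s}. h t)"
    by (simp add: sum.distrib)
  also have "\<dots> = push f g s + push f h s"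
    using push_sup[of ?A g f s] push_sup[of ?A h f s] assms by auto
  finally show "push f (\<lambda>t. g t + h t) s = push f g s + push f h s" .
qed

lemma push_smult: assumes "finite (supp g)"
  shows "push f (\<lambda>t. c * g t) = (\<lambda>s. c * push f g s)"
proof
  fix s
  have "push f (\<lambda>t. c * g t) s = (\<Sum>t\<in>{t\<in>supp g. f t = s}. c * g t)"
    by (rule push_sup) (simp_all add: assms supp_smult)
  also have "\<dots> = c * push f g s" using push_sup[of "supp g" g f s] assms
    by (simp add: sum_distrib_left)
  finally show "push f (\<lambda>t. c * g t) s = c * push f g s" .
qed

lemma push_zero[simp]: "push f (\<lambda>_. 0) = (\<lambda>_. 0)" unfolding push_def by simp

lemma push_ind: "push f (ind t) = ind (f t)"
proof
  fix s
  have 1: "push f (ind t) s = (\<Sum>u\<in>{u\<in>{t}. f u = s}. ind t u)"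
    by (rule push_sup) (auto simp: supp_ind)
  have 2: "{u\<in>{t}. f u = s} = (if f t = s then {t} else {})" by auto
  have 3: "(\<Sum>u\<in>{u\<in>{t}. f u = s}. ind t u) = ind (f t) s"
    unfolding 2 by (simp add: ind_def)
  show "push f (ind t) s = ind (f t) s" by (rule trans[OF 1 3])
qed

lemma supp_push: "finite (supp g) \<Longrightarrow> supp (push f g) \<subseteq> f ` supp g"
proof
  fix x assume "x \<in> supp (push f g)"
  hence "(\<Sum>t\<in>{t. g t \<noteq> 0 \<and> f t = x}. g t) \<noteq> 0" unfolding supp_def push_def by simp
  then obtain t where "t \<in> {t. g t \<noteq> 0 \<and> f t = x}" using sum.not_neutral_contains_not_neutral by blast
  thus "x \<in> f ` supp g" unfolding supp_def by auto
qed

lemma finite_supp_push: "finite (supp g) \<Longrightarrow> finite (supp (push f g))"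
  by (meson finite_imageI finite_subset supp_push)

lemma push_neg: "finite (supp g) \<Longrightarrow> push f (\<lambda>t. - g t) = (\<lambda>s. - push f g s)"
  using push_smult[of g f "-1"] by simp

lemma push_diff: assumes "finite (supp g)" "finite (supp h)"
  shows "push f (\<lambda>t. g t - h t) = (\<lambda>s. push f g s - push f h s)"
proof -
  have fin: "finite (supp (\<lambda>t. - h t))" using finite_supp_smult[of h "-1"] assms by simp
  have A: "push f (\<lambda>t. g t + - h t) = (\<lambda>s. push f g s + push f (\<lambda>t. - h t) s)"
    by (rule push_add[OF assms(1) fin])
  show ?thesis using A push_neg[OF assms(2), of f] by simp
qed

lemma finite_supp_sum: "finite I \<Longrightarrow> (\<And>i. i \<in> I \<Longrightarrow> finite (supp (g i))) \<Longrightarrow> finite (supp (\<lambda>t. \<Sum>i\<in>I. g i t))"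
proof (induction I rule: finite_induct)
  case empty thus ?case by simp
next
  case (insert x F) thus ?case using finite_supp_add[of "g x" "\<lambda>t. \<Sum>i\<in>F. g i t"] by simp
qed

lemma push_sum: "finite I \<Longrightarrow> (\<And>i. i \<in> I \<Longrightarrow> finite (supp (g i))) \<Longrightarrow>
   push f (\<lambda>t. \<Sum>i\<in>I. g i t) = (\<lambda>s. \<Sum>i\<in>I. push f (g i) s)"
proof (induction I rule: finite_induct)
  case empty thus ?case by simp
next
  case (insert x F)
  have "push f (\<lambda>t. \<Sum>i\<in>insert x F. g i t) = push f (\<lambda>t. g x t + (\<Sum>i\<in>F. g i t))"
    using insert by simp
  also have "\<dots> = (\<lambda>s. push f (g x) s + push f (\<lambda>t. \<Sum>i\<in>F. g i t) s)"
    by (rule push_add) (use insert finite_supp_sum in auto)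
  finally show ?case using insert by simp
qed

lemma finite_supp_ind[simp]: "finite (supp (ind t))" by (simp add: supp_ind)

lemma formal_Nil[simp]: "formal [] = (\<lambda>_. 0)" by (simp add: formal_def)
lemma formal_Cons[simp]: "formal ((c, t) # ps) = (\<lambda>s. c * ind t s + formal ps s)"
  by (simp add: formal_def)
lemma formal_append: "formal (ps @ qs) = (\<lambda>s. formal ps s + formal qs s)"
  by (simp add: formal_def)

lemma finite_supp_formal[simp]: "finite (supp (formal ps))"
proof (induction ps)
  case Nil thus ?case by simp
next
  case (Cons p ps) thus ?case
    using finite_supp_add[OF finite_supp_smult[OF finite_supp_ind] Cons.IH]
    by (cases p) simp
qed

lemma push_formal: "push f (formal ps) = formal (map (\<lambda>(c, t). (c, f t)) ps)"
proof (induction ps)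
  case Nil thus ?case by simp
next
  case (Cons p ps)
  obtain c t where p: "p = (c, t)" by (cases p)
  have "push f (formal (p # ps)) = push f (\<lambda>s. c * ind t s + formal ps s)" using p by simp
  also have "\<dots> = (\<lambda>s. push f (\<lambda>s. c * ind t s) s + push f (formal ps) s)"
    by (rule push_add) (auto intro: finite_supp_smult)
  also have "\<dots> = (\<lambda>s. c * ind (f t) s + push f (formal ps) s)"
    by (simp only: push_smult[OF finite_supp_ind] push_ind)
  finally show ?case using Cons p by simp
qed


lemma tuplesI: "length xs = m \<Longrightarrow> set xs \<subseteq> A \<Longrightarrow> xs \<in> tuples m A"
  by (simp add: tuples_def)
lemma tuples_length: "xs \<in> tuples m A \<Longrightarrow> length xs = m" by (simp add: tuples_def)
lemma tuples_set: "xs \<in> tuples m A \<Longrightarrow> set xs \<subseteq> A" by (simp add: tuples_def)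
lemma tuples_nth: "xs \<in> tuples m A \<Longrightarrow> i < m \<Longrightarrow> xs ! i \<in> A"
  by (auto simp: tuples_def)
lemma tuples_update: "xs \<in> tuples m A \<Longrightarrow> a \<in> A \<Longrightarrow> xs[i := a] \<in> tuples m A"
  by (auto simp: tuples_def dest: set_update_subset_insert[THEN subsetD])
lemma tuples_map: "xs \<in> tuples m A \<Longrightarrow> (\<And>x. x \<in> A \<Longrightarrow> f x \<in> B) \<Longrightarrow> map f xs \<in> tuples m B"
  by (auto simp: tuples_def)
lemma tuples_Cons: "x # xs \<in> tuples (Suc m) A \<longleftrightarrow> x \<in> A \<and> xs \<in> tuples m A"
  by (auto simp: tuples_def)

lemma lsum_simps[simp]: "lsum V [] = zero V" "lsum V (x # xs) = add V x (lsum V xs)"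
  by (simp_all add: lsum_def)

definition transp :: "('c \<Rightarrow> 'd) \<Rightarrow> ('k, 'c) hom_nalg \<Rightarrow> ('k, 'd) hom_nalg" where
  "transp e B = \<lparr>carrier = e ` carrier B,
     add = \<lambda>u v. e (add B (inv_into (carrier B) e u) (inv_into (carrier B) e v)),
     zero = e (zero B),
     smult = \<lambda>c u. e (smult B c (inv_into (carrier B) e u)),
     brk = \<lambda>us. e (brk B (map (inv_into (carrier B) e) us)),
     tw = \<lambda>u. e (tw B (inv_into (carrier B) e u))\<rparr>"

context
  fixes e :: "'c \<Rightarrow> 'd" and B :: "('k::field, 'c) hom_nalg"
  assumes inj: "inj_on e (carrier B)"
begin

abbreviation "iv \<equiv> inv_into (carrier B) e"

lemma iv_e[simp]: "x \<in> carrier B \<Longrightarrow> iv (e x) = x" using inj by (simp add: inv_into_f_f)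
lemma map_iv_e: "set xs \<subseteq> carrier B \<Longrightarrow> map iv (map e xs) = xs"
  by (induction xs) auto

lemma tr_carrier[simp]: "carrier (transp e B) = e ` carrier B" by (simp add: transp_def)
lemma tr_zero[simp]: "zero (transp e B) = e (zero B)" by (simp add: transp_def)
lemma tr_add[simp]: "a \<in> carrier B \<Longrightarrow> b \<in> carrier B \<Longrightarrow> add (transp e B) (e a) (e b) = e (add B a b)"
  by (simp add: transp_def)
lemma tr_smult[simp]: "a \<in> carrier B \<Longrightarrow> smult (transp e B) c (e a) = e (smult B c a)"
  by (simp add: transp_def)
lemma tr_tw[simp]: "a \<in> carrier B \<Longrightarrow> tw (transp e B) (e a) = e (tw B a)"
  by (simp add: transp_def)
lemma tr_brk[simp]: "set xs \<subseteq> carrier B \<Longrightarrow> brk (transp e B) (map e xs) = e (brk B xs)"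
  by (simp add: transp_def map_iv_e del: map_map)

lemma tr_e_eq: "a \<in> carrier B \<Longrightarrow> b \<in> carrier B \<Longrightarrow> e a = e b \<longleftrightarrow> a = b"
  using inj by (auto dest: inj_onD)

lemma ball_tuples_img: "(\<forall>us\<in>tuples m (e ` A). P us) \<longleftrightarrow> (\<forall>vs\<in>tuples m A. P (map e vs))"
proof
  assume H: "\<forall>us\<in>tuples m (e ` A). P us"
  show "\<forall>vs\<in>tuples m A. P (map e vs)"
  proof
    fix vs assume "vs \<in> tuples m A"
    hence "map e vs \<in> tuples m (e ` A)" by (auto simp: tuples_def)
    thus "P (map e vs)" using H by blast
  qed
next
  assume H: "\<forall>vs\<in>tuples m A. P (map e vs)"
  show "\<forall>us\<in>tuples m (e ` A). P us"
  proof
    fix us assume us: "us \<in> tuples m (e ` A)"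
    have "\<forall>u\<in>set us. \<exists>a\<in>A. u = e a" using us by (auto simp: tuples_def)
    then obtain vs where "us = map e vs" "set vs \<subseteq> A"
    proof (induction us arbitrary: thesis)
      case Nil thus ?case by auto
    next
      case (Cons u us)
      then obtain a where "a \<in> A" "u = e a" by auto
      moreover obtain vs where "us = map e vs" "set vs \<subseteq> A" using Cons by auto
      ultimately show ?case using Cons(2)[of "a # vs"] by auto
    qed
    thus "P us" using H us by (auto simp: tuples_def)
  qed
qed

lemma tr_lsum: "vspace B \<Longrightarrow> set ws \<subseteq> carrier B \<Longrightarrow> lsum (transp e B) (map e ws) = e (lsum B ws)"
  by (induction ws) auto

lemma tr_vspace: assumes V: "vspace B" shows "vspace (transp e B)"
  unfolding vspace_def tr_carrier ball_simps(9) tr_zero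
proof (intro conjI ballI allI, goal_cases)
  case 1 show ?case using V by simp
next case (2 x y) thus ?case using V by simp
next case (3 c x) thus ?case using V by simp
next case (4 x y z) thus ?case using V by (simp add: vs_assoc)
next case (5 x y) thus ?case using V by (simp add: vs_comm[OF V, of x])
next case (6 x) thus ?case using V by simp
next case (7 x)
  then obtain y where "y \<in> carrier B" "add B x y = zero B" using vs_inv[OF V] by blast
  thus ?case using 7 V by (intro bexI[where x="e y"]) auto
next case (8 c x y) thus ?case using V by (simp add: vs_smult_add)
next case (9 a b x) thus ?case using V by (simp add: vs_add_smult)
next case (10 a b x) thus ?case using V by (simp add: vs_smult_smult)
next case (11 x) thus ?case using V by simp
qed

lemma tr_hl: assumes H: "hom_leibniz_nalg n B" shows "hom_leibniz_nalg n (transp e B)"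
proof -
  have V: "vspace B" using H unfolding hom_leibniz_nalg_def by simp
  have brkc: "\<And>xs. xs \<in> tuples n (carrier B) \<Longrightarrow> brk B xs \<in> carrier B"
    using H unfolding hom_leibniz_nalg_def by blast
  have twc: "\<And>x. x \<in> carrier B \<Longrightarrow> tw B x \<in> carrier B"
    using H unfolding hom_leibniz_nalg_def by blast
  have ml1: "\<And>xs i a b. xs \<in> tuples n (carrier B) \<Longrightarrow> i < n \<Longrightarrow> a \<in> carrier B \<Longrightarrow> b \<in> carrier B \<Longrightarrow>
        brk B (xs[i := add B a b]) = add B (brk B (xs[i := a])) (brk B (xs[i := b]))"
    using H unfolding hom_leibniz_nalg_def by blast
  have ml2: "\<And>xs i c a. xs \<in> tuples n (carrier B) \<Longrightarrow> i < n \<Longrightarrow> a \<in> carrier B \<Longrightarrow>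
        brk B (xs[i := smult B c a]) = smult B c (brk B (xs[i := a]))"
    using H unfolding hom_leibniz_nalg_def by blast
  have twa: "\<And>x y. x \<in> carrier B \<Longrightarrow> y \<in> carrier B \<Longrightarrow> tw B (add B x y) = add B (tw B x) (tw B y)"
    using H unfolding hom_leibniz_nalg_def by blast
  have tws: "\<And>c x. x \<in> carrier B \<Longrightarrow> tw B (smult B c x) = smult B c (tw B x)"
    using H unfolding hom_leibniz_nalg_def by blast
  have twb: "\<And>xs. xs \<in> tuples n (carrier B) \<Longrightarrow> tw B (brk B xs) = brk B (map (tw B) xs)"
    using H unfolding hom_leibniz_nalg_def by blast
  have leib: "\<And>xs ys. xs \<in> tuples n (carrier B) \<Longrightarrow> ys \<in> tuples (n - 1) (carrier B) \<Longrightarrow>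
        brk B (brk B xs # map (tw B) ys) =
        lsum B (map (\<lambda>i. brk B ((map (tw B) xs)[i := brk B (xs ! i # ys)])) [0..<n])"
    using H unfolding hom_leibniz_nalg_def by blast
  have tset: "\<And>xs m. xs \<in> tuples m (carrier B) \<Longrightarrow> set xs \<subseteq> carrier B" by (simp add: tuples_def)
  show ?thesis
    unfolding hom_leibniz_nalg_def tr_carrier ball_simps(9) ball_tuples_img
  proof (intro conjI ballI allI impI)
    show "vspace (transp e B)" by (rule tr_vspace[OF V])
  next
    fix xs assume "xs \<in> tuples n (carrier B)"
    thus "brk (transp e B) (map e xs) \<in> e ` carrier B" using brkc tset by simp
  next
    fix xs i a b assume xs: "xs \<in> tuples n (carrier B)" and i: "i < n" and a: "a \<in> carrier B" and b: "b \<in> carrier B"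
    have s: "\<And>c. c \<in> carrier B \<Longrightarrow> set (xs[i := c]) \<subseteq> carrier B"
      using tuples_update[OF xs] tset by blast
    show "brk (transp e B) ((map e xs)[i := add (transp e B) (e a) (e b)]) =
       add (transp e B) (brk (transp e B) ((map e xs)[i := e a])) (brk (transp e B) ((map e xs)[i := e b]))"
      using a b V s brkc tuples_update[OF xs] ml1[OF xs i a b]
      by (simp add: map_update[symmetric])
  next
    fix xs i c a assume xs: "xs \<in> tuples n (carrier B)" and i: "i < n" and a: "a \<in> carrier B"
    have s: "\<And>c. c \<in> carrier B \<Longrightarrow> set (xs[i := c]) \<subseteq> carrier B"
      using tuples_update[OF xs] tset by blast
    show "brk (transp e B) ((map e xs)[i := smult (transp e B) c (e a)]) =
        smult (transp e B) c (brk (transp e B) ((map e xs)[i := e a]))"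
      using a V s brkc tuples_update[OF xs] ml2[OF xs i a]
      by (simp add: map_update[symmetric])
  next
    fix x assume "x \<in> carrier B" thus "tw (transp e B) (e x) \<in> e ` carrier B" using twc by simp
  next
    fix x y assume "x \<in> carrier B" "y \<in> carrier B"
    thus "tw (transp e B) (add (transp e B) (e x) (e y)) = add (transp e B) (tw (transp e B) (e x)) (tw (transp e B) (e y))"
      using V twc twa by simp
  next
    fix c x assume "x \<in> carrier B"
    thus "tw (transp e B) (smult (transp e B) c (e x)) = smult (transp e B) c (tw (transp e B) (e x))"
      using V twc tws by simp
  next
    fix xs assume xs: "xs \<in> tuples n (carrier B)"
    have A: "map (tw (transp e B)) (map e xs) = map e (map (tw B) xs)" using tset[OF xs] by auto
    have s2: "set (map (tw B) xs) \<subseteq> carrier B" using tset[OF xs] twc by auto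
    have "tw (transp e B) (brk (transp e B) (map e xs)) = e (brk B (map (tw B) xs))"
      using xs tset brkc twb by simp
    also have "\<dots> = brk (transp e B) (map e (map (tw B) xs))" by (rule tr_brk[OF s2, symmetric])
    also have "\<dots> = brk (transp e B) (map (tw (transp e B)) (map e xs))" by (simp only: A)
    finally show "tw (transp e B) (brk (transp e B) (map e xs)) = brk (transp e B) (map (tw (transp e B)) (map e xs))" .
  next
    fix xs ys assume xs: "xs \<in> tuples n (carrier B)" and ys: "ys \<in> tuples (n - 1) (carrier B)"
    have mt: "\<And>zs. set zs \<subseteq> carrier B \<Longrightarrow> map (tw (transp e B)) (map e zs) = map e (map (tw B) zs)" by auto
    have ln: "length xs = n" using xs by (simp add: tuples_def)
    have L: "brk (transp e B) (brk (transp e B) (map e xs) # map (tw (transp e B)) (map e ys))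
        = e (brk B (brk B xs # map (tw B) ys))"
    proof -
      have "brk (transp e B) (brk (transp e B) (map e xs) # map (tw (transp e B)) (map e ys))
          = brk (transp e B) (map e (brk B xs # map (tw B) ys))"
        using xs ys tset mt[of ys] by (simp del: map_map)
      also have "\<dots> = e (brk B (brk B xs # map (tw B) ys))"
        using xs ys tset twc brkc by (intro tr_brk) auto
      finally show ?thesis .
    qed
    have T: "\<And>i. i \<in> set [0..<n] \<Longrightarrow> brk (transp e B) ((map (tw (transp e B)) (map e xs))[i := brk (transp e B) (map e xs ! i # map e ys)])
        = e (brk B ((map (tw B) xs)[i := brk B (xs ! i # ys)]))"
    proof -
      fix i assume "i \<in> set [0..<n]"
      hence i: "i < n" by simp
      have xi: "xs ! i \<in> carrier B" using tuples_nth[OF xs i] .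
      have c1: "set (xs ! i # ys) \<subseteq> carrier B" using xi tset[OF ys] by simp
      have t1: "xs ! i # ys \<in> tuples n (carrier B)" using xi ys i
        by (simp add: tuples_def)
      have eq: "map e xs ! i # map e ys = map e (xs ! i # ys)" using ln i by simp
      have "brk (transp e B) (map e xs ! i # map e ys) = e (brk B (xs ! i # ys))"
        unfolding eq by (rule tr_brk[OF c1])
      moreover have "set ((map (tw B) xs)[i := brk B (xs ! i # ys)]) \<subseteq> carrier B"
        using tset[OF tuples_update[OF tuples_map[OF xs twc] brkc[OF t1]]] .
      ultimately show "brk (transp e B) ((map (tw (transp e B)) (map e xs))[i := brk (transp e B) (map e xs ! i # map e ys)])
        = e (brk B ((map (tw B) xs)[i := brk B (xs ! i # ys)]))"
        using mt[OF tset[OF xs]] by (simp add: map_update[symmetric] del: map_map)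
    qed
    have R: "lsum (transp e B) (map (\<lambda>i. brk (transp e B) ((map (tw (transp e B)) (map e xs))[i := brk (transp e B) (map e xs ! i # map e ys)])) [0..<n])
        = e (lsum B (map (\<lambda>i. brk B ((map (tw B) xs)[i := brk B (xs ! i # ys)])) [0..<n]))"
    proof -
      have "map (\<lambda>i. brk (transp e B) ((map (tw (transp e B)) (map e xs))[i := brk (transp e B) (map e xs ! i # map e ys)])) [0..<n]
        = map e (map (\<lambda>i. brk B ((map (tw B) xs)[i := brk B (xs ! i # ys)])) [0..<n])"
        (is "?M1 = map e ?M2")
        by (subst map_map) (intro map_cong refl, simp only: comp_apply T)
      moreover have "set (map (\<lambda>i. brk B ((map (tw B) xs)[i := brk B (xs ! i # ys)])) [0..<n]) \<subseteq> carrier B"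
      proof -
        { fix i assume i: "i < n"
          have t1: "xs ! i # ys \<in> tuples n (carrier B)" using tuples_nth[OF xs i] ys i
            by (simp add: tuples_def)
          have "(map (tw B) xs)[i := brk B (xs ! i # ys)] \<in> tuples n (carrier B)"
            using tuples_update[OF tuples_map[OF xs twc] brkc[OF t1]] by simp
          hence "brk B ((map (tw B) xs)[i := brk B (xs ! i # ys)]) \<in> carrier B" using brkc by blast }
        thus ?thesis by auto
      qed
      ultimately show ?thesis using tr_lsum[OF V, of ?M2] by (simp only:)
    qed
    show "brk (transp e B) (brk (transp e B) (map e xs) # map (tw (transp e B)) (map e ys)) =
       lsum (transp e B) (map (\<lambda>i. brk (transp e B) ((map (tw (transp e B)) (map e xs))[i := brk (transp e B) (map e xs ! i # map e ys)])) [0..<n])"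
      unfolding L R using leib[OF xs ys] by simp
  qed
qed

end


lemma homD:
  assumes "hom n V W f"
  shows "\<And>x. x \<in> carrier V \<Longrightarrow> f x \<in> carrier W"
    "\<And>x y. x \<in> carrier V \<Longrightarrow> y \<in> carrier V \<Longrightarrow> f (add V x y) = add W (f x) (f y)"
    "\<And>c x. x \<in> carrier V \<Longrightarrow> f (smult V c x) = smult W c (f x)"
    "\<And>xs. xs \<in> tuples n (carrier V) \<Longrightarrow> f (brk V xs) = brk W (map f xs)"
    "\<And>x. x \<in> carrier V \<Longrightarrow> f (tw V x) = tw W (f x)"
  using assms unfolding hom_def by blast+

lemma homI:
  assumes "\<And>x. x \<in> carrier V \<Longrightarrow> f x \<in> carrier W"
    "\<And>x y. x \<in> carrier V \<Longrightarrow> y \<in> carrier V \<Longrightarrow> f (add V x y) = add W (f x) (f y)"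
    "\<And>c x. x \<in> carrier V \<Longrightarrow> f (smult V c x) = smult W c (f x)"
    "\<And>xs. xs \<in> tuples n (carrier V) \<Longrightarrow> f (brk V xs) = brk W (map f xs)"
    "\<And>x. x \<in> carrier V \<Longrightarrow> f (tw V x) = tw W (f x)"
  shows "hom n V W f"
  using assms unfolding hom_def by blast

lemma hlD:
  assumes "hom_leibniz_nalg n V"
  shows "vspace V"
    "\<And>xs. xs \<in> tuples n (carrier V) \<Longrightarrow> brk V xs \<in> carrier V"
    "\<And>xs i a b. xs \<in> tuples n (carrier V) \<Longrightarrow> i < n \<Longrightarrow> a \<in> carrier V \<Longrightarrow> b \<in> carrier V \<Longrightarrow>
        brk V (xs[i := add V a b]) = add V (brk V (xs[i := a])) (brk V (xs[i := b]))"
    "\<And>xs i c a. xs \<in> tuples n (carrier V) \<Longrightarrow> i < n \<Longrightarrow> a \<in> carrier V \<Longrightarrow>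
        brk V (xs[i := smult V c a]) = smult V c (brk V (xs[i := a]))"
    "\<And>x. x \<in> carrier V \<Longrightarrow> tw V x \<in> carrier V"
    "\<And>x y. x \<in> carrier V \<Longrightarrow> y \<in> carrier V \<Longrightarrow> tw V (add V x y) = add V (tw V x) (tw V y)"
    "\<And>c x. x \<in> carrier V \<Longrightarrow> tw V (smult V c x) = smult V c (tw V x)"
    "\<And>xs. xs \<in> tuples n (carrier V) \<Longrightarrow> tw V (brk V xs) = brk V (map (tw V) xs)"
    "\<And>xs ys. xs \<in> tuples n (carrier V) \<Longrightarrow> ys \<in> tuples (n - 1) (carrier V) \<Longrightarrow>
        brk V (brk V xs # map (tw V) ys) =
        lsum V (map (\<lambda>i. brk V ((map (tw V) xs)[i := brk V (xs ! i # ys)])) [0..<n])"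
  using assms unfolding hom_leibniz_nalg_def by blast+

lemma hom_zero: "vspace V \<Longrightarrow> vspace W \<Longrightarrow> hom n V W f \<Longrightarrow> f (zero V) = zero W"
proof -
  assume V: "vspace V" and W: "vspace W" and f: "hom n V W f"
  have "f (zero V) = f (smult V 0 (zero V))" using V by simp
  also have "\<dots> = smult W 0 (f (zero V))" by (rule homD(3)[OF f]) (simp add: V)
  also have "\<dots> = zero W" using W homD(1)[OF f] V by simp
  finally show ?thesis .
qed

context
  fixes e :: "'c \<Rightarrow> 'd" and B :: "('k::field, 'c) hom_nalg"
  assumes inj: "inj_on e (carrier B)"
begin

lemma tr_hom_in: assumes g: "hom n K B g" shows "hom n K (transp e B) (e \<circ> g)"
proof (rule homI)
  note gd = homD[OF g]
  show "\<And>x. x \<in> carrier K \<Longrightarrow> (e \<circ> g) x \<in> carrier (transp e B)" using gd(1) inj by simp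
  show "\<And>x y. x \<in> carrier K \<Longrightarrow> y \<in> carrier K \<Longrightarrow> (e \<circ> g) (add K x y) = add (transp e B) ((e \<circ> g) x) ((e \<circ> g) y)"
    using gd(1,2) inj by simp
  show "\<And>c x. x \<in> carrier K \<Longrightarrow> (e \<circ> g) (smult K c x) = smult (transp e B) c ((e \<circ> g) x)"
    using gd(1,3) inj by simp
  show "\<And>x. x \<in> carrier K \<Longrightarrow> (e \<circ> g) (tw K x) = tw (transp e B) ((e \<circ> g) x)"
    using gd(1,5) inj by simp
  fix xs assume xs: "xs \<in> tuples n (carrier K)"
  have s: "set (map g xs) \<subseteq> carrier B" using xs gd(1) by (auto simp: tuples_def)
  have "(e \<circ> g) (brk K xs) = e (brk B (map g xs))" using gd(4)[OF xs] by simp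
  also have "\<dots> = brk (transp e B) (map e (map g xs))" using tr_brk[OF inj s] by simp
  finally show "(e \<circ> g) (brk K xs) = brk (transp e B) (map (e \<circ> g) xs)" by simp
qed

lemma tr_hom_out: assumes h: "hom n K (transp e B) h" and HB: "hom_leibniz_nalg n B"
  shows "hom n K B (inv_into (carrier B) e \<circ> h)"
proof -
  note hd = homD[OF h]
  note bd = hlD[OF HB]
  define g where "g = inv_into (carrier B) e \<circ> h"
  have hx: "\<And>x. x \<in> carrier K \<Longrightarrow> inv_into (carrier B) e (h x) \<in> carrier B \<and> e (inv_into (carrier B) e (h x)) = h x"
    using hd(1) tr_carrier[OF inj] by (auto intro: inv_into_into f_inv_into_f)
  have g1: "\<And>x. x \<in> carrier K \<Longrightarrow> g x \<in> carrier B" using hx by (simp add: g_def)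
  have g2: "\<And>x. x \<in> carrier K \<Longrightarrow> h x = e (g x)" using hx by (simp add: g_def)
  have g3: "\<And>x. x \<in> carrier K \<Longrightarrow> h x \<in> carrier (transp e B) \<Longrightarrow> g x = inv_into (carrier B) e (h x)" by (simp add: g_def)
  have ig: "\<And>x a. a \<in> carrier B \<Longrightarrow> h x = e a \<Longrightarrow> g x = a"
    using iv_e[OF inj] by (simp add: g_def)
  have "hom n K B g"
  proof (rule homI)
    show "\<And>x. x \<in> carrier K \<Longrightarrow> g x \<in> carrier B" by (rule g1)
    show "\<And>x y. x \<in> carrier K \<Longrightarrow> y \<in> carrier K \<Longrightarrow> g (add K x y) = add B (g x) (g y)"
    proof -
      fix x y assume x: "x \<in> carrier K" and y: "y \<in> carrier K"
      have "h (add K x y) = add (transp e B) (e (g x)) (e (g y))" using hd(2)[OF x y] g2[OF x] g2[OF y] by simp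
      also have "\<dots> = e (add B (g x) (g y))" by (rule tr_add[OF inj g1[OF x] g1[OF y]])
      finally show "g (add K x y) = add B (g x) (g y)" by (rule ig[OF vs_add[OF bd(1) g1[OF x] g1[OF y]]])
    qed
    show "\<And>c x. x \<in> carrier K \<Longrightarrow> g (smult K c x) = smult B c (g x)"
    proof -
      fix c x assume x: "x \<in> carrier K"
      have "h (smult K c x) = smult (transp e B) c (e (g x))" using hd(3)[OF x] g2[OF x] by simp
      also have "\<dots> = e (smult B c (g x))" by (rule tr_smult[OF inj g1[OF x]])
      finally show "g (smult K c x) = smult B c (g x)" by (rule ig[OF vs_smult[OF bd(1) g1[OF x]]])
    qed
    show "\<And>x. x \<in> carrier K \<Longrightarrow> g (tw K x) = tw B (g x)"
    proof -
      fix x assume x: "x \<in> carrier K"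
      have "h (tw K x) = tw (transp e B) (e (g x))" using hd(5)[OF x] g2[OF x] by simp
      also have "\<dots> = e (tw B (g x))" by (rule tr_tw[OF inj g1[OF x]])
      finally show "g (tw K x) = tw B (g x)" by (rule ig[OF bd(5)[OF g1[OF x]]])
    qed
    show "\<And>xs. xs \<in> tuples n (carrier K) \<Longrightarrow> g (brk K xs) = brk B (map g xs)"
    proof -
      fix xs assume xs: "xs \<in> tuples n (carrier K)"
      have mt: "map g xs \<in> tuples n (carrier B)" using tuples_map[OF xs g1] .
      have mm: "map h xs = map e (map g xs)" using xs g2 by (auto simp: tuples_def)
      have "h (brk K xs) = brk (transp e B) (map e (map g xs))" using hd(4)[OF xs] unfolding mm .
      also have "\<dots> = e (brk B (map g xs))" by (rule tr_brk[OF inj tuples_set[OF mt]])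
      finally show "g (brk K xs) = brk B (map g xs)" by (rule ig[OF bd(2)[OF mt]])
    qed
  qed
  thus ?thesis by (simp add: g_def)
qed

lemma kernel_mem: "x \<in> kernel K L \<pi> \<longleftrightarrow> x \<in> carrier K \<and> \<pi> x = zero L"
  by (simp add: kernel_def)

lemma tr_ace: assumes A: "alpha_central_extension n B L \<pi>"
  shows "alpha_central_extension n (transp e B) L (\<pi> \<circ> inv_into (carrier B) e)"
proof -
  let ?iv = "inv_into (carrier B) e"
  have E: "extension n B L \<pi>" using A unfolding alpha_central_extension_def by blast
  have HB: "hom_leibniz_nalg n B" and HL: "hom_leibniz_nalg n L" and P: "hom n B L \<pi>" and S: "\<pi> ` carrier B = carrier L"
    using E unfolding extension_def by blast+
  have AC: "\<And>xs i. length xs = n \<Longrightarrow> i < n \<Longrightarrow> xs ! i \<in> carrier B \<Longrightarrow>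
        (\<forall>j<n. j \<noteq> i \<longrightarrow> xs ! j \<in> tw B ` kernel B L \<pi>) \<Longrightarrow> brk B xs = zero B"
    using A unfolding alpha_central_extension_def by blast
  note bd = hlD[OF HB]
  have ivc: "\<And>u. u \<in> carrier (transp e B) \<Longrightarrow> ?iv u \<in> carrier B"
    using tr_carrier[OF inj] by (auto intro: inv_into_into)
  have ive: "\<And>a. a \<in> carrier B \<Longrightarrow> ?iv (e a) = a" using iv_e[OF inj] .
  have Tadd: "\<And>u v. add (transp e B) u v = e (add B (?iv u) (?iv v))" by (simp add: transp_def)
  have Tsm: "\<And>c u. smult (transp e B) c u = e (smult B c (?iv u))" by (simp add: transp_def)
  have Ttw: "\<And>u. tw (transp e B) u = e (tw B (?iv u))" by (simp add: transp_def)
  have Tbrk: "\<And>us. brk (transp e B) us = e (brk B (map ?iv us))" by (simp add: transp_def)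
  have Pd: "hom n (transp e B) L (\<pi> \<circ> ?iv)"
  proof (rule homI)
    note pd = homD[OF P]
    show "\<And>x. x \<in> carrier (transp e B) \<Longrightarrow> (\<pi> \<circ> ?iv) x \<in> carrier L" using pd(1) ivc by simp
    show "\<And>x y. x \<in> carrier (transp e B) \<Longrightarrow> y \<in> carrier (transp e B) \<Longrightarrow>
       (\<pi> \<circ> ?iv) (add (transp e B) x y) = add L ((\<pi> \<circ> ?iv) x) ((\<pi> \<circ> ?iv) y)"
      using pd(2) ivc ive bd(1) Tadd by simp
    show "\<And>c x. x \<in> carrier (transp e B) \<Longrightarrow> (\<pi> \<circ> ?iv) (smult (transp e B) c x) = smult L c ((\<pi> \<circ> ?iv) x)"
      using pd(3) ivc ive bd(1) Tsm by simp
    show "\<And>x. x \<in> carrier (transp e B) \<Longrightarrow> (\<pi> \<circ> ?iv) (tw (transp e B) x) = tw L ((\<pi> \<circ> ?iv) x)"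
      using pd(5) ivc ive bd(5) Ttw by simp
    fix xs assume xs: "xs \<in> tuples n (carrier (transp e B))"
    have mt: "map ?iv xs \<in> tuples n (carrier B)" using tuples_map[OF xs ivc] .
    show "(\<pi> \<circ> ?iv) (brk (transp e B) xs) = brk L (map (\<pi> \<circ> ?iv) xs)"
      using pd(4)[OF mt] ive bd(2)[OF mt] Tbrk by simp
  qed
  have Sd: "(\<pi> \<circ> ?iv) ` carrier (transp e B) = carrier L"
    using S ive tr_carrier[OF inj] by (force simp: image_comp)
  show ?thesis unfolding alpha_central_extension_def extension_def
  proof (intro conjI allI impI)
    show "hom_leibniz_nalg n (transp e B)" by (rule tr_hl[OF inj HB])
    show "hom_leibniz_nalg n L" by (rule HL)
    show "hom n (transp e B) L (\<pi> \<circ> ?iv)" by (rule Pd)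
    show "(\<pi> \<circ> ?iv) ` carrier (transp e B) = carrier L" by (rule Sd)
  next
    fix xs i assume H: "length xs = n \<and> i < n \<and> xs ! i \<in> carrier (transp e B) \<and>
      (\<forall>j<n. j \<noteq> i \<longrightarrow> xs ! j \<in> tw (transp e B) ` kernel (transp e B) L (\<pi> \<circ> ?iv))"
    have "brk B (map ?iv xs) = zero B"
    proof (rule AC)
      show "length (map ?iv xs) = n" "i < n" using H by auto
      show "map ?iv xs ! i \<in> carrier B" using H ivc by simp
      show "\<forall>j<n. j \<noteq> i \<longrightarrow> map ?iv xs ! j \<in> tw B ` kernel B L \<pi>"
      proof (intro allI impI)
        fix j assume j: "j < n" "j \<noteq> i"
        then obtain k where k: "k \<in> kernel (transp e B) L (\<pi> \<circ> ?iv)" "xs ! j = tw (transp e B) k" using H by blast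
        have kc: "?iv k \<in> carrier B" using k ivc unfolding kernel_def by blast
        have "?iv k \<in> kernel B L \<pi>" using k kc unfolding kernel_def by simp
        moreover have "map ?iv xs ! j = tw B (?iv k)" using j H k(2) Ttw ive bd(5)[OF kc] by simp
        ultimately show "map ?iv xs ! j \<in> tw B ` kernel B L \<pi>" by blast
      qed
    qed
    thus "brk (transp e B) xs = zero (transp e B)" using Tbrk tr_zero[OF inj] by simp
  qed
qed

end

lemma univ_use:
  fixes K :: "('k::field, 'a) hom_nalg" and B :: "('k, 'c) hom_nalg" and e :: "'c \<Rightarrow> ('a list \<Rightarrow> 'k) set"
  assumes U: "universal_alpha_central_extension n K L \<pi>" and A: "alpha_central_extension n B L \<pi>0"
    and inj: "inj_on e (carrier B)"
  shows "\<exists>h. hom n K B h \<and> (\<forall>x\<in>carrier K. \<pi>0 (h x) = \<pi> x)"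
    and "\<And>h1 h2. hom n K B h1 \<Longrightarrow> (\<forall>x\<in>carrier K. \<pi>0 (h1 x) = \<pi> x) \<Longrightarrow>
            hom n K B h2 \<Longrightarrow> (\<forall>x\<in>carrier K. \<pi>0 (h2 x) = \<pi> x) \<Longrightarrow> \<forall>x\<in>carrier K. h1 x = h2 x"
proof -
  let ?iv = "inv_into (carrier B) e"
  have A': "alpha_central_extension n (transp e B) L (\<pi>0 \<circ> ?iv)" by (rule tr_ace[OF inj A])
  have HB: "hom_leibniz_nalg n B" using A unfolding alpha_central_extension_def extension_def by blast
  have "\<forall>(K' :: ('k, ('a list \<Rightarrow> 'k) set) hom_nalg) \<pi>'. alpha_central_extension n K' L \<pi>' \<longrightarrow>
        (\<exists>h. hom n K K' h \<and> (\<forall>x\<in>carrier K. \<pi>' (h x) = \<pi> x) \<and>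
           (\<forall>h'. hom n K K' h' \<and> (\<forall>x\<in>carrier K. \<pi>' (h' x) = \<pi> x) \<longrightarrow>
                 (\<forall>x\<in>carrier K. h' x = h x)))"
    using U unfolding universal_alpha_central_extension_def by (elim conjE)
  hence "\<exists>h. hom n K (transp e B) h \<and> (\<forall>x\<in>carrier K. (\<pi>0 \<circ> ?iv) (h x) = \<pi> x) \<and>
           (\<forall>h'. hom n K (transp e B) h' \<and> (\<forall>x\<in>carrier K. (\<pi>0 \<circ> ?iv) (h' x) = \<pi> x) \<longrightarrow>
                 (\<forall>x\<in>carrier K. h' x = h x))"
    using A' by blast
  then obtain h where h: "hom n K (transp e B) h" "\<forall>x\<in>carrier K. (\<pi>0 \<circ> ?iv) (h x) = \<pi> x"
    and uq0: "\<forall>h'. hom n K (transp e B) h' \<and> (\<forall>x\<in>carrier K. (\<pi>0 \<circ> ?iv) (h' x) = \<pi> x) \<longrightarrow>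
           (\<forall>x\<in>carrier K. h' x = h x)" by blast
  have uq: "\<And>h'. hom n K (transp e B) h' \<Longrightarrow> (\<forall>x\<in>carrier K. (\<pi>0 \<circ> ?iv) (h' x) = \<pi> x) \<Longrightarrow>
           \<forall>x\<in>carrier K. h' x = h x" using uq0 by blast
  show "\<exists>h. hom n K B h \<and> (\<forall>x\<in>carrier K. \<pi>0 (h x) = \<pi> x)"
    using tr_hom_out[OF inj h(1) HB] h(2) by (intro exI[where x="?iv \<circ> h"]) auto
  fix h1 h2 assume h1: "hom n K B h1" "\<forall>x\<in>carrier K. \<pi>0 (h1 x) = \<pi> x"
    and h2: "hom n K B h2" "\<forall>x\<in>carrier K. \<pi>0 (h2 x) = \<pi> x"
  have e1: "\<forall>x\<in>carrier K. (e \<circ> h1) x = h x"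
    using uq[OF tr_hom_in[OF inj h1(1)]] h1(2) homD(1)[OF h1(1)] iv_e[OF inj] by simp
  have e2: "\<forall>x\<in>carrier K. (e \<circ> h2) x = h x"
    using uq[OF tr_hom_in[OF inj h2(1)]] h2(2) homD(1)[OF h2(1)] iv_e[OF inj] by simp
  show "\<forall>x\<in>carrier K. h1 x = h2 x"
  proof
    fix x assume x: "x \<in> carrier K"
    have "e (h1 x) = e (h2 x)" using e1 e2 x by simp
    thus "h1 x = h2 x" using inj_onD[OF inj] homD(1)[OF h1(1) x] homD(1)[OF h2(1) x] by blast
  qed
qed


definition pstruct :: "('k, 'a) hom_nalg \<Rightarrow> ('k, 'w) hom_nalg \<Rightarrow> ('a \<times> 'w) set \<Rightarrow> ('a list \<Rightarrow> 'w) \<Rightarrow> ('w \<Rightarrow> 'w) \<Rightarrow> ('k, 'a \<times> 'w) hom_nalg" where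
  "pstruct K W C \<beta> \<tau> = \<lparr>carrier = C,
     add = \<lambda>x y. (add K (fst x) (fst y), add W (snd x) (snd y)), zero = (zero K, zero W),
     smult = \<lambda>c x. (smult K c (fst x), smult W c (snd x)),
     brk = \<lambda>xs. (brk K (map fst xs), \<beta> (map fst xs)),
     tw = \<lambda>x. (tw K (fst x), \<tau> (snd x))\<rparr>"

lemma pstruct_simps[simp]:
  "carrier (pstruct K W C \<beta> \<tau>) = C"
  "add (pstruct K W C \<beta> \<tau>) x y = (add K (fst x) (fst y), add W (snd x) (snd y))"
  "zero (pstruct K W C \<beta> \<tau>) = (zero K, zero W)"
  "smult (pstruct K W C \<beta> \<tau>) c x = (smult K c (fst x), smult W c (snd x))"
  "brk (pstruct K W C \<beta> \<tau>) xs = (brk K (map fst xs), \<beta> (map fst xs))"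
  "tw (pstruct K W C \<beta> \<tau>) x = (tw K (fst x), \<tau> (snd x))"
  by (simp_all add: pstruct_def)

lemma lsum_pstruct: "lsum (pstruct K W C \<beta> \<tau>) xs = (lsum K (map fst xs), lsum W (map snd xs))"
  by (induction xs) simp_all

lemma pstruct_eq: "pstruct K W C \<beta> \<tau> = (prodV K W)\<lparr>carrier := C,
   brk := \<lambda>xs. (brk K (map fst xs), \<beta> (map fst xs)), tw := \<lambda>x. (tw K (fst x), \<tau> (snd x))\<rparr>"
  by (simp add: pstruct_def prodV_def)

lemma pstruct_vspace:
  assumes "vspace K" "vspace W" "C \<subseteq> carrier K \<times> carrier W" "(zero K, zero W) \<in> C"
    "\<forall>x\<in>C. \<forall>y\<in>C. (add K (fst x) (fst y), add W (snd x) (snd y)) \<in> C"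
    "\<forall>c. \<forall>x\<in>C. (smult K c (fst x), smult W c (snd x)) \<in> C"
  shows "vspace (pstruct K W C \<beta> \<tau>)"
  unfolding pstruct_eq by (rule sub_vspace[OF prodV_vspace]) (use assms in auto)

lemma map_fst_tuples: "XS \<in> tuples m C \<Longrightarrow> C \<subseteq> A \<times> B \<Longrightarrow> map fst XS \<in> tuples m A"
  by (auto simp: tuples_def)

lemma prod_hl:
  fixes K :: "('k::field, 'a) hom_nalg" and W :: "('k, 'w) hom_nalg"
  assumes HK: "hom_leibniz_nalg n K" and VW: "vspace W"
    and C: "C \<subseteq> carrier K \<times> carrier W" "(zero K, zero W) \<in> C"
    "\<forall>x\<in>C. \<forall>y\<in>C. (add K (fst x) (fst y), add W (snd x) (snd y)) \<in> C"
    "\<forall>c. \<forall>x\<in>C. (smult K c (fst x), smult W c (snd x)) \<in> C"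
    "\<forall>x\<in>C. (tw K (fst x), \<tau> (snd x)) \<in> C"
    "\<forall>XS\<in>tuples n C. (brk K (map fst XS), \<beta> (map fst XS)) \<in> C"
    and b1: "\<And>xs i a b. xs \<in> tuples n (carrier K) \<Longrightarrow> i < n \<Longrightarrow> a \<in> carrier K \<Longrightarrow> b \<in> carrier K \<Longrightarrow>
        \<beta> (xs[i := add K a b]) = add W (\<beta> (xs[i := a])) (\<beta> (xs[i := b]))"
    and b2: "\<And>xs i c a. xs \<in> tuples n (carrier K) \<Longrightarrow> i < n \<Longrightarrow> a \<in> carrier K \<Longrightarrow>
        \<beta> (xs[i := smult K c a]) = smult W c (\<beta> (xs[i := a]))"
    and t1: "\<And>x y. x \<in> carrier W \<Longrightarrow> y \<in> carrier W \<Longrightarrow> \<tau> (add W x y) = add W (\<tau> x) (\<tau> y)"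
    and t2: "\<And>c x. x \<in> carrier W \<Longrightarrow> \<tau> (smult W c x) = smult W c (\<tau> x)"
    and t3: "\<And>xs. xs \<in> tuples n (carrier K) \<Longrightarrow> \<tau> (\<beta> xs) = \<beta> (map (tw K) xs)"
    and bl: "\<And>xs ys. xs \<in> tuples n (carrier K) \<Longrightarrow> ys \<in> tuples (n - 1) (carrier K) \<Longrightarrow>
        \<beta> (brk K xs # map (tw K) ys) =
        lsum W (map (\<lambda>i. \<beta> ((map (tw K) xs)[i := brk K (xs ! i # ys)])) [0..<n])"
  shows "hom_leibniz_nalg n (pstruct K W C \<beta> \<tau>)"
proof -
  note kd = hlD[OF HK]
  let ?P = "pstruct K W C \<beta> \<tau>"
  have Cf: "\<And>x. x \<in> C \<Longrightarrow> fst x \<in> carrier K" and Cs: "\<And>x. x \<in> C \<Longrightarrow> snd x \<in> carrier W" using C(1) by auto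
  have mf: "\<And>XS m. XS \<in> tuples m C \<Longrightarrow> map fst XS \<in> tuples m (carrier K)"
    using map_fst_tuples C(1) by blast
  show ?thesis unfolding hom_leibniz_nalg_def pstruct_simps
  proof (intro conjI ballI allI impI)
    show "vspace ?P" by (rule pstruct_vspace[OF kd(1) VW C(1-4)])
  next
    fix XS assume "XS \<in> tuples n C" thus "(brk K (map fst XS), \<beta> (map fst XS)) \<in> C" using C(6) by blast
  next
    fix XS i a b assume XS: "XS \<in> tuples n C" and i: "i < n" and a: "a \<in> C" and b: "b \<in> C"
    show "(brk K (map fst (XS[i := (add K (fst a) (fst b), add W (snd a) (snd b))])),
           \<beta> (map fst (XS[i := (add K (fst a) (fst b), add W (snd a) (snd b))]))) =
          (add K (fst (brk K (map fst (XS[i := a])), \<beta> (map fst (XS[i := a]))))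
                 (fst (brk K (map fst (XS[i := b])), \<beta> (map fst (XS[i := b])))),
           add W (snd (brk K (map fst (XS[i := a])), \<beta> (map fst (XS[i := a]))))
                 (snd (brk K (map fst (XS[i := b])), \<beta> (map fst (XS[i := b])))))"
      using kd(3)[OF mf[OF XS] i Cf[OF a] Cf[OF b]] b1[OF mf[OF XS] i Cf[OF a] Cf[OF b]]
      by (simp add: map_update)
  next
    fix XS i c a assume XS: "XS \<in> tuples n C" and i: "i < n" and a: "a \<in> C"
    show "(brk K (map fst (XS[i := (smult K c (fst a), smult W c (snd a))])),
           \<beta> (map fst (XS[i := (smult K c (fst a), smult W c (snd a))]))) =
          (smult K c (fst (brk K (map fst (XS[i := a])), \<beta> (map fst (XS[i := a])))),
           smult W c (snd (brk K (map fst (XS[i := a])), \<beta> (map fst (XS[i := a])))))"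
      using kd(4)[OF mf[OF XS] i Cf[OF a]] b2[OF mf[OF XS] i Cf[OF a]]
      by (simp add: map_update)
  next
    fix x assume "x \<in> C" thus "(tw K (fst x), \<tau> (snd x)) \<in> C" using C(5) by blast
  next
    fix x y assume x: "x \<in> C" and y: "y \<in> C"
    show "(tw K (fst (add K (fst x) (fst y), add W (snd x) (snd y))), \<tau> (snd (add K (fst x) (fst y), add W (snd x) (snd y)))) =
       (add K (fst (tw K (fst x), \<tau> (snd x))) (fst (tw K (fst y), \<tau> (snd y))),
        add W (snd (tw K (fst x), \<tau> (snd x))) (snd (tw K (fst y), \<tau> (snd y))))"
      using kd(6)[OF Cf[OF x] Cf[OF y]] t1[OF Cs[OF x] Cs[OF y]] by simp
  next
    fix c x assume x: "x \<in> C"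
    show "(tw K (fst (smult K c (fst x), smult W c (snd x))), \<tau> (snd (smult K c (fst x), smult W c (snd x)))) =
       (smult K c (fst (tw K (fst x), \<tau> (snd x))), smult W c (snd (tw K (fst x), \<tau> (snd x))))"
      using kd(7)[OF Cf[OF x]] t2[OF Cs[OF x]] by simp
  next
    fix XS assume XS: "XS \<in> tuples n C"
    have "map fst (map (\<lambda>x. (tw K (fst x), \<tau> (snd x))) XS) = map (tw K) (map fst XS)" by simp
    thus "(tw K (fst (brk K (map fst XS), \<beta> (map fst XS))), \<tau> (snd (brk K (map fst XS), \<beta> (map fst XS)))) =
       (brk K (map fst (map (\<lambda>x. (tw K (fst x), \<tau> (snd x))) XS)), \<beta> (map fst (map (\<lambda>x. (tw K (fst x), \<tau> (snd x))) XS)))"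
      using kd(8)[OF mf[OF XS]] t3[OF mf[OF XS]] by (simp del: map_map)
  next
    fix XS YS assume XS: "XS \<in> tuples n C" and YS: "YS \<in> tuples (n - 1) C"
    let ?xs = "map fst XS" and ?ys = "map fst YS"
    have ln: "length XS = n" using XS by (simp add: tuples_def)
    have e1: "map fst (map (\<lambda>x. (tw K (fst x), \<tau> (snd x))) YS) = map (tw K) ?ys" by simp
    have e2: "\<And>i. i < n \<Longrightarrow> map fst ((map (\<lambda>x. (tw K (fst x), \<tau> (snd x))) XS)[i := (brk K (map fst (XS ! i # YS)), \<beta> (map fst (XS ! i # YS)))])
        = (map (tw K) ?xs)[i := brk K (?xs ! i # ?ys)]"
      using ln by (simp add: map_update comp_def)
    have LR: "map (\<lambda>i. (brk K (map fst ((map (\<lambda>x. (tw K (fst x), \<tau> (snd x))) XS)[i := (brk K (map fst (XS ! i # YS)), \<beta> (map fst (XS ! i # YS)))])),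
              \<beta> (map fst ((map (\<lambda>x. (tw K (fst x), \<tau> (snd x))) XS)[i := (brk K (map fst (XS ! i # YS)), \<beta> (map fst (XS ! i # YS)))])))) [0..<n]
        = map (\<lambda>i. (brk K ((map (tw K) ?xs)[i := brk K (?xs ! i # ?ys)]), \<beta> ((map (tw K) ?xs)[i := brk K (?xs ! i # ?ys)]))) [0..<n]"
      (is "?L = ?R") by (intro map_cong refl) (simp only: e2 atLeastLessThan_iff set_upt)
    have LS: "lsum ?P ?R = (lsum K (map (\<lambda>i. brk K ((map (tw K) ?xs)[i := brk K (?xs ! i # ?ys)])) [0..<n]),
           lsum W (map (\<lambda>i. \<beta> ((map (tw K) ?xs)[i := brk K (?xs ! i # ?ys)])) [0..<n]))"
      by (simp add: lsum_pstruct comp_def)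
    have R: "lsum ?P ?L = (lsum K (map (\<lambda>i. brk K ((map (tw K) ?xs)[i := brk K (?xs ! i # ?ys)])) [0..<n]),
           lsum W (map (\<lambda>i. \<beta> ((map (tw K) ?xs)[i := brk K (?xs ! i # ?ys)])) [0..<n]))" unfolding LR by (rule LS)
    have L: "(brk K (map fst ((brk K (map fst XS), \<beta> (map fst XS)) # map (\<lambda>x. (tw K (fst x), \<tau> (snd x))) YS)),
        \<beta> (map fst ((brk K (map fst XS), \<beta> (map fst XS)) # map (\<lambda>x. (tw K (fst x), \<tau> (snd x))) YS)))
       = (brk K (brk K ?xs # map (tw K) ?ys), \<beta> (brk K ?xs # map (tw K) ?ys))"
      by (simp only: list.map fst_conv e1)
    show "(brk K (map fst ((brk K (map fst XS), \<beta> (map fst XS)) # map (\<lambda>x. (tw K (fst x), \<tau> (snd x))) YS)),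
        \<beta> (map fst ((brk K (map fst XS), \<beta> (map fst XS)) # map (\<lambda>x. (tw K (fst x), \<tau> (snd x))) YS))) =
       lsum ?P ?L"
      unfolding L R using kd(9)[OF mf[OF XS] mf[OF YS]] bl[OF mf[OF XS] mf[OF YS]] by simp
  qed
qed


locale cext =
  fixes n :: nat and K :: "('k::field, 'a) hom_nalg" and L :: "('k, 'b) hom_nalg" and \<pi> :: "'a \<Rightarrow> 'b"
  assumes n2: "2 \<le> n" and CE: "central_extension n K L \<pi>"
begin

lemma HK: "hom_leibniz_nalg n K" and HL: "hom_leibniz_nalg n L" and P: "hom n K L \<pi>"
  and S: "\<pi> ` carrier K = carrier L" and cen: "kernel K L \<pi> \<subseteq> center n K"
  using CE unfolding central_extension_def extension_def by blast+

lemmas kd = hlD[OF HK] and ld = hlD[OF HL] and pd = homD[OF P]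

lemma VK: "vspace K" by (rule kd(1))
lemma VL: "vspace L" by (rule ld(1))

lemma tw_zero_L: "tw L (zero L) = zero L"
proof -
  have "tw L (zero L) = tw L (smult L 0 (zero L))" using VL by simp
  also have "\<dots> = smult L 0 (tw L (zero L))" by (rule ld(7)) (simp add: VL)
  also have "\<dots> = zero L" using ld(5) VL by simp
  finally show ?thesis .
qed

lemma tw_zero_K: "tw K (zero K) = zero K"
proof -
  have "tw K (zero K) = tw K (smult K 0 (zero K))" using VK by simp
  also have "\<dots> = smult K 0 (tw K (zero K))" by (rule kd(7)) (simp add: VK)
  also have "\<dots> = zero K" using kd(5) VK by simp
  finally show ?thesis .
qed

lemma twM: "x \<in> kernel K L \<pi> \<Longrightarrow> tw K x \<in> kernel K L \<pi>"
  unfolding kernel_def using kd(5) pd(5) tw_zero_L by auto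

lemma kerC: "x \<in> kernel K L \<pi> \<Longrightarrow> x \<in> carrier K" by (simp add: kernel_def)

lemma brk_center: "xs \<in> tuples n (carrier K) \<Longrightarrow> j < n \<Longrightarrow> xs ! j \<in> center n K \<Longrightarrow> brk K xs = zero K"
proof -
  assume xs: "xs \<in> tuples n (carrier K)" and j: "j < n" and c: "xs ! j \<in> center n K"
  hence "brk K (xs[j := xs ! j]) = zero K" unfolding center_def by blast
  thus ?thesis by simp
qed

lemma brk_alpha:
  assumes "length xs = n" "i < n" "xs ! i \<in> carrier K" "\<forall>j<n. j \<noteq> i \<longrightarrow> xs ! j \<in> tw K ` kernel K L \<pi>"
  shows "brk K xs = zero K"
proof -
  let ?j = "if i = 0 then 1 else 0"
  have j: "?j < n" "?j \<noteq> i" using n2 by auto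
  have xt: "xs \<in> tuples n (carrier K)"
  proof (rule tuplesI)
    show "length xs = n" by fact
    show "set xs \<subseteq> carrier K"
    proof
      fix x assume "x \<in> set xs"
      then obtain k where k: "k < n" "xs ! k = x" using assms(1) by (auto simp: in_set_conv_nth)
      show "x \<in> carrier K"
      proof (cases "k = i")
        case True thus ?thesis using k assms(3) by simp
      next
        case False
        then obtain m where "m \<in> kernel K L \<pi>" "xs ! k = tw K m" using k(1) assms(4) by blast
        thus ?thesis using k(2) kd(5) kerC by simp
      qed
    qed
  qed
  obtain m where m: "m \<in> kernel K L \<pi>" "xs ! ?j = tw K m" using assms(4) j by blast
  have "xs ! ?j \<in> center n K" using twM[OF m(1)] cen m(2) by auto
  thus ?thesis using brk_center[OF xt j(1)] by blast
qed

lemma K_ace: "alpha_central_extension n K L \<pi>"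
  using CE brk_alpha unfolding alpha_central_extension_def central_extension_def by blast

lemma prod_ace:
  fixes W :: "('k, 'w) hom_nalg"
  assumes VW: "vspace W"
    and C: "C \<subseteq> carrier K \<times> carrier W" "(zero K, zero W) \<in> C"
    "\<forall>x\<in>C. \<forall>y\<in>C. (add K (fst x) (fst y), add W (snd x) (snd y)) \<in> C"
    "\<forall>c. \<forall>x\<in>C. (smult K c (fst x), smult W c (snd x)) \<in> C"
    "\<forall>x\<in>C. (tw K (fst x), \<tau> (snd x)) \<in> C"
    "\<forall>XS\<in>tuples n C. (brk K (map fst XS), \<beta> (map fst XS)) \<in> C"
    and b1: "\<And>xs i a b. xs \<in> tuples n (carrier K) \<Longrightarrow> i < n \<Longrightarrow> a \<in> carrier K \<Longrightarrow> b \<in> carrier K \<Longrightarrow>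
        \<beta> (xs[i := add K a b]) = add W (\<beta> (xs[i := a])) (\<beta> (xs[i := b]))"
    and b2: "\<And>xs i c a. xs \<in> tuples n (carrier K) \<Longrightarrow> i < n \<Longrightarrow> a \<in> carrier K \<Longrightarrow>
        \<beta> (xs[i := smult K c a]) = smult W c (\<beta> (xs[i := a]))"
    and t1: "\<And>x y. x \<in> carrier W \<Longrightarrow> y \<in> carrier W \<Longrightarrow> \<tau> (add W x y) = add W (\<tau> x) (\<tau> y)"
    and t2: "\<And>c x. x \<in> carrier W \<Longrightarrow> \<tau> (smult W c x) = smult W c (\<tau> x)"
    and t3: "\<And>xs. xs \<in> tuples n (carrier K) \<Longrightarrow> \<tau> (\<beta> xs) = \<beta> (map (tw K) xs)"
    and bl: "\<And>xs ys. xs \<in> tuples n (carrier K) \<Longrightarrow> ys \<in> tuples (n - 1) (carrier K) \<Longrightarrow>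
        \<beta> (brk K xs # map (tw K) ys) =
        lsum W (map (\<lambda>i. \<beta> ((map (tw K) xs)[i := brk K (xs ! i # ys)])) [0..<n])"
    and surj: "\<And>x. x \<in> carrier K \<Longrightarrow> \<exists>w. (x, w) \<in> C"
    and bz: "\<And>xs i. length xs = n \<Longrightarrow> i < n \<Longrightarrow> xs ! i \<in> carrier K \<Longrightarrow>
        (\<forall>j<n. j \<noteq> i \<longrightarrow> xs ! j \<in> tw K ` kernel K L \<pi>) \<Longrightarrow> \<beta> xs = zero W"
  shows "alpha_central_extension n (pstruct K W C \<beta> \<tau>) L (\<pi> \<circ> fst)"
proof -
  let ?P = "pstruct K W C \<beta> \<tau>"
  have HP: "hom_leibniz_nalg n ?P" by (rule prod_hl[OF HK VW C b1 b2 t1 t2 t3 bl])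
  have Cf: "\<And>x. x \<in> C \<Longrightarrow> fst x \<in> carrier K" using C(1) by auto
  have mf: "\<And>XS m. XS \<in> tuples m C \<Longrightarrow> map fst XS \<in> tuples m (carrier K)"
    using map_fst_tuples C(1) by blast
  have hp: "hom n ?P L (\<pi> \<circ> fst)"
  proof (rule homI)
    show "\<And>x. x \<in> carrier ?P \<Longrightarrow> (\<pi> \<circ> fst) x \<in> carrier L" using pd(1) Cf by simp
    show "\<And>x y. x \<in> carrier ?P \<Longrightarrow> y \<in> carrier ?P \<Longrightarrow> (\<pi> \<circ> fst) (add ?P x y) = add L ((\<pi> \<circ> fst) x) ((\<pi> \<circ> fst) y)"
      using pd(2) Cf by simp
    show "\<And>c x. x \<in> carrier ?P \<Longrightarrow> (\<pi> \<circ> fst) (smult ?P c x) = smult L c ((\<pi> \<circ> fst) x)"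
      using pd(3) Cf by simp
    show "\<And>x. x \<in> carrier ?P \<Longrightarrow> (\<pi> \<circ> fst) (tw ?P x) = tw L ((\<pi> \<circ> fst) x)"
      using pd(5) Cf by simp
    show "\<And>xs. xs \<in> tuples n (carrier ?P) \<Longrightarrow> (\<pi> \<circ> fst) (brk ?P xs) = brk L (map (\<pi> \<circ> fst) xs)"
      using pd(4) mf by simp
  qed
  have sp: "(\<pi> \<circ> fst) ` carrier ?P = carrier L"
  proof
    show "(\<pi> \<circ> fst) ` carrier ?P \<subseteq> carrier L" using pd(1) Cf by auto
    show "carrier L \<subseteq> (\<pi> \<circ> fst) ` carrier ?P"
    proof
      fix l assume "l \<in> carrier L"
      then obtain x where x: "x \<in> carrier K" "l = \<pi> x" using S by blast
      then obtain w where "(x, w) \<in> C" using surj by blast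
      thus "l \<in> (\<pi> \<circ> fst) ` carrier ?P" using x by force
    qed
  qed
  show ?thesis unfolding alpha_central_extension_def extension_def
  proof (intro conjI allI impI HP HL hp sp)
    fix XS i assume H: "length XS = n \<and> i < n \<and> XS ! i \<in> carrier ?P \<and>
      (\<forall>j<n. j \<noteq> i \<longrightarrow> XS ! j \<in> tw ?P ` kernel ?P L (\<pi> \<circ> fst))"
    have H2: "\<forall>j<n. j \<noteq> i \<longrightarrow> map fst XS ! j \<in> tw K ` kernel K L \<pi>"
    proof (intro allI impI)
      fix j assume j: "j < n" "j \<noteq> i"
      then obtain k where k: "k \<in> kernel ?P L (\<pi> \<circ> fst)" "XS ! j = tw ?P k" using H by blast
      have "fst k \<in> kernel K L \<pi>" using k(1) Cf unfolding kernel_def by auto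
      moreover have "map fst XS ! j = tw K (fst k)" using k(2) j H by simp
      ultimately show "map fst XS ! j \<in> tw K ` kernel K L \<pi>" by blast
    qed
    have H1: "length (map fst XS) = n" "i < n" "map fst XS ! i \<in> carrier K" using H Cf by auto
    show "brk ?P XS = zero ?P" using brk_alpha[OF H1 H2] bz[OF H1 H2] by simp
  qed
qed

end


definition tag :: "'a \<Rightarrow> 'a list \<Rightarrow> 'k::field" where "tag x s = ind [] s + ind [x] s"

definition enc0 :: "'a \<times> 'a set \<Rightarrow> ('a list \<Rightarrow> 'k::field) set" where
  "enc0 p = insert (tag (fst p)) ((\<lambda>y. ind [y]) ` snd p)"

lemma ind_inj: "(ind s :: 'x \<Rightarrow> 'k::field) = ind t \<longleftrightarrow> s = t"
proof
  assume "(ind s :: 'x \<Rightarrow> 'k) = ind t"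
  hence "(ind s :: 'x \<Rightarrow> 'k) s = ind t s" by simp
  thus "s = t" by (auto simp: ind_def split: if_splits)
qed simp

lemma enc0_inj: "inj (enc0 :: 'a \<times> 'a set \<Rightarrow> ('a list \<Rightarrow> 'k::field) set)"
proof (rule injI)
  fix p q :: "'a \<times> 'a set"
  assume E: "(enc0 p :: ('a list \<Rightarrow> 'k) set) = enc0 q"
  have tg: "\<And>x. (tag x :: 'a list \<Rightarrow> 'k) [] = 1" by (simp add: tag_def ind_def)
  have ig: "\<And>y. (ind [y] :: 'a list \<Rightarrow> 'k) [] = 0" by (simp add: ind_def)
  have A: "\<And>p. {f \<in> (enc0 p :: ('a list \<Rightarrow> 'k) set). f [] \<noteq> 0} = {tag (fst p)}"
    unfolding enc0_def using tg ig by auto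
  have B: "\<And>p. {f \<in> (enc0 p :: ('a list \<Rightarrow> 'k) set). f [] = 0} = (\<lambda>y. ind [y]) ` snd p"
    unfolding enc0_def using tg ig by auto
  have "(tag (fst p) :: 'a list \<Rightarrow> 'k) = tag (fst q)" using A[of p] A[of q] E by auto
  hence "(tag (fst p) :: 'a list \<Rightarrow> 'k) [fst p] = tag (fst q) [fst p]" by simp
  hence 1: "fst p = fst q" by (auto simp: tag_def ind_def split: if_splits)
  have "((\<lambda>y. ind [y]) ` snd p :: ('a list \<Rightarrow> 'k) set) = (\<lambda>y. ind [y]) ` snd q" using B[of p] B[of q] E by auto
  moreover have "inj (\<lambda>y. (ind [y] :: 'a list \<Rightarrow> 'k))" by (rule injI) (simp add: ind_inj)
  ultimately have 2: "snd p = snd q" by (simp add: inj_image_eq_iff)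
  show "p = q" using 1 2 by (simp add: prod_eq_iff)
qed

context cext
begin

abbreviation "D \<equiv> derived n K"

lemma D_induct_carrier: "x \<in> vspan K (brk K ` tuples n (carrier K)) \<Longrightarrow> x \<in> carrier K"
  by (induction rule: vspan.induct) (use VK kd(2) in auto)

lemma D_carrier: "x \<in> D \<Longrightarrow> x \<in> carrier K"
  unfolding derived_def by (rule D_induct_carrier)

lemma D_subsp: "subsp K D"
  unfolding subsp_def derived_def using D_carrier[unfolded derived_def]
  by (auto intro: vspan.intros)

lemma brk_D: "xs \<in> tuples n (carrier K) \<Longrightarrow> brk K xs \<in> D"
  unfolding derived_def by (auto intro: vspan.gen)

lemma twD: "x \<in> D \<Longrightarrow> tw K x \<in> D"
  unfolding derived_def
proof (induction rule: vspan.induct)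
  case zero thus ?case using tw_zero_K by (simp add: vspan.zero)
next
  case (gen x)
  then obtain xs where xs: "xs \<in> tuples n (carrier K)" "x = brk K xs" by blast
  have "tw K x = brk K (map (tw K) xs)" using kd(8)[OF xs(1)] xs(2) by simp
  moreover have "map (tw K) xs \<in> tuples n (carrier K)" using tuples_map[OF xs(1) kd(5)] .
  ultimately show ?case by (auto intro: vspan.gen)
next
  case (add x y)
  have "x \<in> carrier K" "y \<in> carrier K" using add(1,2) D_induct_carrier by blast+
  thus ?case using add kd(6) by (simp add: vspan.add)
next
  case (smult x c)
  have "x \<in> carrier K" using smult(1) D_induct_carrier by blast
  thus ?case using smult kd(7) by (simp add: vspan.smult)
qed

lemma HL0:
  assumes U: "universal_alpha_central_extension n K L \<pi>"
  shows "carrier K \<subseteq> D"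
proof -
  let ?Q = "qspace K D" and ?cl = "qcl K D" and ?tq = "qmap K D (tw K)"
  let ?C = "carrier K \<times> (?cl ` carrier K)"
  let ?B = "pstruct K ?Q ?C (\<lambda>_. D) ?tq"
  note S = D_subsp
  have VQ: "vspace ?Q" by (rule qspace_vspace[OF VK S])
  have clz: "?cl (zero K) = D" by (rule qcl_zero[OF VK S])
  have cla: "\<And>x y. x \<in> carrier K \<Longrightarrow> y \<in> carrier K \<Longrightarrow> add ?Q (?cl x) (?cl y) = ?cl (add K x y)"
    by (rule qcl_add[OF VK S])
  have cls: "\<And>c x. x \<in> carrier K \<Longrightarrow> smult ?Q c (?cl x) = ?cl (smult K c x)"
    by (rule qcl_smult[OF VK S])
  have clt: "\<And>x. x \<in> carrier K \<Longrightarrow> ?tq (?cl x) = ?cl (tw K x)"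
    by (rule qmap_cl[OF VK S]) (use kd(5) kd(6) twD in auto)
  have DD: "add ?Q D D = D" using cla[of "zero K" "zero K"] clz VK by simp
  have sD: "\<And>c. smult ?Q c D = D" using cls[of "zero K"] clz VK by simp
  have tD: "?tq D = D" using clt[of "zero K"] clz VK tw_zero_K by simp
  have Dc: "D \<in> ?cl ` carrier K" using clz VK by (metis image_eqI vs_zero)
  have ace: "alpha_central_extension n ?B L (\<pi> \<circ> fst)"
  proof (rule prod_ace[OF VQ])
    show "?C \<subseteq> carrier K \<times> carrier ?Q" by simp
    show "(zero K, zero ?Q) \<in> ?C" using Dc VK by simp
    show "\<forall>x\<in>?C. \<forall>y\<in>?C. (add K (fst x) (fst y), add ?Q (snd x) (snd y)) \<in> ?C"
      using cla VK by auto
    show "\<forall>c. \<forall>x\<in>?C. (smult K c (fst x), smult ?Q c (snd x)) \<in> ?C"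
      using cls VK by auto
    show "\<forall>x\<in>?C. (tw K (fst x), ?tq (snd x)) \<in> ?C"
      using clt kd(5) by auto
    show "\<forall>XS\<in>tuples n ?C. (brk K (map fst XS), D) \<in> ?C"
      using kd(2) map_fst_tuples[of _ n ?C "carrier K"] Dc by auto
    show "\<And>xs i a b. D = add ?Q D D" using DD by simp
    show "\<And>xs i c a. D = smult ?Q c D" using sD by simp
    show "\<And>x y. x \<in> carrier ?Q \<Longrightarrow> y \<in> carrier ?Q \<Longrightarrow> ?tq (add ?Q x y) = add ?Q (?tq x) (?tq y)"
    proof -
      fix x y assume "x \<in> carrier ?Q" "y \<in> carrier ?Q"
      then obtain a b where ab: "a \<in> carrier K" "b \<in> carrier K" "x = ?cl a" "y = ?cl b" by auto
      thus "?tq (add ?Q x y) = add ?Q (?tq x) (?tq y)"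
        using cla clt kd(5) kd(6) VK by (simp del: qspace_simps)
    qed
    show "\<And>c x. x \<in> carrier ?Q \<Longrightarrow> ?tq (smult ?Q c x) = smult ?Q c (?tq x)"
    proof -
      fix c x assume "x \<in> carrier ?Q"
      then obtain a where ab: "a \<in> carrier K" "x = ?cl a" by auto
      thus "?tq (smult ?Q c x) = smult ?Q c (?tq x)"
        using cls clt kd(5) kd(7) VK by (simp del: qspace_simps)
    qed
    show "\<And>xs. ?tq D = D" by (rule tD)
    show "\<And>xs ys. D = lsum ?Q (map (\<lambda>i. D) [0..<n])"
      using lsum_zeros[OF VQ, of "map (\<lambda>i. D) [0..<n]"] by simp
    show "\<And>x. x \<in> carrier K \<Longrightarrow> \<exists>w. (x, w) \<in> ?C" using Dc by blast
    show "\<And>xs i. D = zero ?Q" by simp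
  qed
  have inj: "inj_on (enc0 :: 'a \<times> 'a set \<Rightarrow> ('a list \<Rightarrow> 'k) set) (carrier ?B)"
    using enc0_inj by (blast intro: inj_on_subset)
  let ?h1 = "\<lambda>x. (x, D)" and ?h2 = "\<lambda>x. (x, ?cl x)"
  have h1: "hom n K ?B ?h1"
  proof (rule homI)
    show "\<And>x. x \<in> carrier K \<Longrightarrow> ?h1 x \<in> carrier ?B" using Dc by simp
    show "\<And>x y. x \<in> carrier K \<Longrightarrow> y \<in> carrier K \<Longrightarrow> ?h1 (add K x y) = add ?B (?h1 x) (?h1 y)"
      using DD by simp
    show "\<And>c x. x \<in> carrier K \<Longrightarrow> ?h1 (smult K c x) = smult ?B c (?h1 x)" using sD by simp
    show "\<And>xs. xs \<in> tuples n (carrier K) \<Longrightarrow> ?h1 (brk K xs) = brk ?B (map ?h1 xs)" by (simp add: comp_def)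
    show "\<And>x. x \<in> carrier K \<Longrightarrow> ?h1 (tw K x) = tw ?B (?h1 x)" using tD by simp
  qed
  have h2: "hom n K ?B ?h2"
  proof (rule homI)
    show "\<And>x. x \<in> carrier K \<Longrightarrow> ?h2 x \<in> carrier ?B" by simp
    show "\<And>x y. x \<in> carrier K \<Longrightarrow> y \<in> carrier K \<Longrightarrow> ?h2 (add K x y) = add ?B (?h2 x) (?h2 y)"
      using cla by simp
    show "\<And>c x. x \<in> carrier K \<Longrightarrow> ?h2 (smult K c x) = smult ?B c (?h2 x)" using cls by simp
    show "\<And>xs. xs \<in> tuples n (carrier K) \<Longrightarrow> ?h2 (brk K xs) = brk ?B (map ?h2 xs)"
      using qcl_eq_zero[OF VK S] brk_D kd(2) by (simp add: comp_def)
    show "\<And>x. x \<in> carrier K \<Longrightarrow> ?h2 (tw K x) = tw ?B (?h2 x)" using clt by simp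
  qed
  have "\<forall>x\<in>carrier K. ?h1 x = ?h2 x"
    by (rule univ_use(2)[OF U ace inj h1 _ h2]) auto
  hence "\<forall>x\<in>carrier K. ?cl x = D" by simp
  thus ?thesis using qcl_eq_zero[OF VK S] by blast
qed

end


context cext
begin

definition R :: "('a list \<Rightarrow> 'k) set" where
  "R = fspan (delta2_image n K \<union> tensor_rels n K)"

abbreviation FS :: "('k, 'a list \<Rightarrow> 'k) hom_nalg" where "FS \<equiv> Fsp"

lemma supp_sub_fin: "finite A \<Longrightarrow> (\<And>s. g s \<noteq> 0 \<Longrightarrow> s \<in> A) \<Longrightarrow> finite (supp g)"
  by (rule finite_subset[of _ A]) (auto simp: supp_def)

lemma delta2_fin: "finite (supp (delta2_pure n K xs ys))"
proof (rule supp_sub_fin[of "insert (brk K xs # map (tw K) ys) ((\<lambda>i. (map (tw K) xs)[i := brk K (xs ! i # ys)]) ` {..<n})"])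
  fix s assume s: "delta2_pure n K xs ys s \<noteq> 0"
  show "s \<in> insert (brk K xs # map (tw K) ys) ((\<lambda>i. (map (tw K) xs)[i := brk K (xs ! i # ys)]) ` {..<n})"
  proof (rule ccontr)
    assume "s \<notin> insert (brk K xs # map (tw K) ys) ((\<lambda>i. (map (tw K) xs)[i := brk K (xs ! i # ys)]) ` {..<n})"
    hence "delta2_pure n K xs ys s = 0" unfolding delta2_pure_def ind_def by (auto simp: image_iff intro!: sum.neutral)
    thus False using s by simp
  qed
qed simp

lemma G_fin: "g \<in> delta2_image n K \<union> tensor_rels n K \<Longrightarrow> finite (supp g)"
proof -
  assume "g \<in> delta2_image n K \<union> tensor_rels n K"
  then consider (d) xs ys where "g = delta2_pure n K xs ys"
    | (t1) xs i a b where "g = (\<lambda>s. ind (xs[i := add K a b]) s - ind (xs[i := a]) s - ind (xs[i := b]) s)"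
    | (t2) xs i c a where "g = (\<lambda>s. ind (xs[i := smult K c a]) s - c * ind (xs[i := a]) s)"
    unfolding delta2_image_def tensor_rels_def by blast
  thus ?thesis
  proof cases
    case d thus ?thesis using delta2_fin by simp
  next
    case t1 thus ?thesis
      by (intro supp_sub_fin[of "{xs[i := add K a b], xs[i := a], xs[i := b]}"]) (auto simp: ind_def split: if_splits)
  next
    case t2 thus ?thesis
      by (intro supp_sub_fin[of "{xs[i := smult K c a], xs[i := a]}"]) (auto simp: ind_def split: if_splits)
  qed
qed

lemma R_fin: "f \<in> R \<Longrightarrow> finite (supp f)"
  unfolding R_def using fspan_finite G_fin by blast

lemma R_subsp: "subsp FS R"
  unfolding R_def by (rule fspan_subsp) (rule G_fin)

lemma R_gen: "g \<in> delta2_image n K \<union> tensor_rels n K \<Longrightarrow> g \<in> R"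
  unfolding R_def by (rule fspan.gen)

abbreviation "twl \<equiv> map (tw K)"

lemma rel1_R: "xs \<in> tuples n (carrier K) \<Longrightarrow> i < n \<Longrightarrow> a \<in> carrier K \<Longrightarrow> b \<in> carrier K \<Longrightarrow>
  (\<lambda>s. ind (xs[i := add K a b]) s - ind (xs[i := a]) s - ind (xs[i := b]) s) \<in> R"
  by (rule R_gen, rule UnI2) (unfold tensor_rels_def, blast)

lemma rel2_R: "xs \<in> tuples n (carrier K) \<Longrightarrow> i < n \<Longrightarrow> a \<in> carrier K \<Longrightarrow>
  (\<lambda>s. ind (xs[i := smult K c a]) s - c * ind (xs[i := a]) s) \<in> R"
  by (rule R_gen, rule UnI2) (unfold tensor_rels_def, blast)

lemma d2_R: "xs \<in> tuples n (carrier K) \<Longrightarrow> ys \<in> tuples (n - 1) (carrier K) \<Longrightarrow>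
  delta2_pure n K xs ys \<in> R"
  by (rule R_gen, rule UnI1) (unfold delta2_image_def, blast)

lemma push_R: "f \<in> R \<Longrightarrow> push twl f \<in> R"
  unfolding R_def
proof (induction rule: fspan.induct)
  case zero thus ?case by (simp add: fspan.zero)
next
  case (gen g)
  then consider (d) xs ys where "g = delta2_pure n K xs ys" "xs \<in> tuples n (carrier K)" "ys \<in> tuples (n - 1) (carrier K)"
    | (t1) xs i a b where "g = (\<lambda>s. ind (xs[i := add K a b]) s - ind (xs[i := a]) s - ind (xs[i := b]) s)"
       "xs \<in> tuples n (carrier K)" "i < n" "a \<in> carrier K" "b \<in> carrier K"
    | (t2) xs i c a where "g = (\<lambda>s. ind (xs[i := smult K c a]) s - c * ind (xs[i := a]) s)"
       "xs \<in> tuples n (carrier K)" "i < n" "a \<in> carrier K"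
    unfolding delta2_image_def tensor_rels_def by blast
  thus ?case
  proof cases
    case d
    let ?a = "brk K xs # map (tw K) ys" and ?b = "\<lambda>i. (map (tw K) xs)[i := brk K (xs ! i # ys)]"
    have g: "g = (\<lambda>s. ind ?a s - (\<Sum>i<n. ind (?b i) s))" using d(1) unfolding delta2_pure_def by simp
    have fs: "finite (supp (\<lambda>s. \<Sum>i<n. ind (?b i) s))" by (rule finite_supp_sum) auto
    have "push twl g = (\<lambda>s. ind (twl ?a) s - (\<Sum>i<n. ind (twl (?b i)) s))"
      unfolding g push_diff[OF finite_supp_ind fs] push_sum[OF finite_lessThan finite_supp_ind] push_ind ..
    moreover have "twl ?a = brk K (twl xs) # map (tw K) (twl ys)" using kd(8)[OF d(2)] by simp
    moreover have "\<And>i. i < n \<Longrightarrow> twl (?b i) = (map (tw K) (twl xs))[i := brk K (twl xs ! i # twl ys)]"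
    proof -
      fix i assume i: "i < n"
      have t: "xs ! i # ys \<in> tuples n (carrier K)" using tuples_nth[OF d(2) i] d(3) n2
        by (auto simp: tuples_def)
      have l: "length xs = n" using d(2) by (simp add: tuples_def)
      show "twl (?b i) = (map (tw K) (twl xs))[i := brk K (twl xs ! i # twl ys)]"
        using kd(8)[OF t] i l by (simp add: map_update)
    qed
    ultimately have "push twl g = delta2_pure n K (twl xs) (twl ys)"
      unfolding delta2_pure_def by (auto intro!: ext sum.cong)
    moreover have "twl xs \<in> tuples n (carrier K)" "twl ys \<in> tuples (n - 1) (carrier K)"
      using tuples_map[OF d(2) kd(5)] tuples_map[OF d(3) kd(5)] by auto
    ultimately show ?thesis using d2_R unfolding R_def by simp
  next
    case t1
    have "push twl g = (\<lambda>s. ind (twl (xs[i := add K a b])) s - ind (twl (xs[i := a])) s - ind (twl (xs[i := b])) s)"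
    proof -
      have f1: "finite (supp (\<lambda>s. ind (xs[i := add K a b]) s - ind (xs[i := a]) s))"
        using finite_supp_add[OF finite_supp_ind finite_supp_smult[OF finite_supp_ind, of "-1"]] by simp
      show ?thesis unfolding t1(1) push_diff[OF f1 finite_supp_ind] push_diff[OF finite_supp_ind finite_supp_ind] push_ind ..
    qed
    also have "\<dots> = (\<lambda>s. ind ((twl xs)[i := add K (tw K a) (tw K b)]) s - ind ((twl xs)[i := tw K a]) s - ind ((twl xs)[i := tw K b]) s)"
      using kd(6)[OF t1(4,5)] by (simp add: map_update)
    finally have "push twl g = \<dots>" .
    moreover have "twl xs \<in> tuples n (carrier K)" using tuples_map[OF t1(2) kd(5)] .
    ultimately show ?thesis using rel1_R[OF _ t1(3) kd(5)[OF t1(4)] kd(5)[OF t1(5)]] unfolding R_def by simp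
  next
    case t2
    have "push twl g = (\<lambda>s. ind (twl (xs[i := smult K c a])) s - c * ind (twl (xs[i := a])) s)"
    proof -
      show ?thesis unfolding t2(1) push_diff[OF finite_supp_ind finite_supp_smult[OF finite_supp_ind]]
        push_smult[OF finite_supp_ind] push_ind ..
    qed
    also have "\<dots> = (\<lambda>s. ind ((twl xs)[i := smult K c (tw K a)]) s - c * ind ((twl xs)[i := tw K a]) s)"
      using kd(7)[OF t2(4)] by (simp add: map_update)
    finally have "push twl g = \<dots>" .
    moreover have "twl xs \<in> tuples n (carrier K)" using tuples_map[OF t2(2) kd(5)] .
    ultimately show ?thesis using rel2_R[OF _ t2(3) kd(5)[OF t2(4)]] unfolding R_def by simp
  qed
next
  case (add f g)
  have "finite (supp f)" "finite (supp g)" using add(1,2) fspan_finite G_fin by blast+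
  hence "push twl (\<lambda>t. f t + g t) = (\<lambda>s. push twl f s + push twl g s)" by (rule push_add)
  thus ?case using fspan.add[OF add(3,4)] by simp
next
  case (smult f c)
  have "finite (supp f)" using smult(1) fspan_finite G_fin by blast
  hence "push twl (\<lambda>t. c * f t) = (\<lambda>s. c * push twl f s)" by (rule push_smult)
  thus ?case using fspan.smult[OF smult(2)] by simp
qed

end


lemma delta1_Nil[simp]: "delta1 K [] = zero K" by (simp add: delta1_def)
lemma delta1_Cons[simp]: "delta1 K ((c, t) # ps) = add K (smult K c (brk K t)) (delta1 K ps)"
  by (simp add: delta1_def)

context cext
begin

definition psok :: "('k \<times> 'a list) list \<Rightarrow> bool" where
  "psok ps \<longleftrightarrow> (\<forall>(c, t)\<in>set ps. t \<in> tuples n (carrier K))"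

lemma psok_Nil[simp]: "psok []" by (simp add: psok_def)
lemma psok_Cons[simp]: "psok ((c, t) # ps) \<longleftrightarrow> t \<in> tuples n (carrier K) \<and> psok ps"
  by (simp add: psok_def)
lemma psok_append: "psok (ps @ qs) \<longleftrightarrow> psok ps \<and> psok qs" by (auto simp: psok_def)

lemma delta1_carrier: "psok ps \<Longrightarrow> delta1 K ps \<in> carrier K"
  by (induction ps) (auto simp: VK kd(2))

lemma delta1_append: "psok ps \<Longrightarrow> psok qs \<Longrightarrow> delta1 K (ps @ qs) = add K (delta1 K ps) (delta1 K qs)"
proof (induction ps)
  case Nil thus ?case using vs_zero_add[OF VK delta1_carrier[OF Nil(2)]] by simp
next
  case (Cons p ps)
  obtain c t where p: "p = (c, t)" by (cases p)
  have t: "t \<in> tuples n (carrier K)" and ps: "psok ps" using Cons(2) p by auto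
  have "delta1 K ((p # ps) @ qs) = add K (smult K c (brk K t)) (add K (delta1 K ps) (delta1 K qs))"
    using Cons(1)[OF ps Cons(3)] p by simp
  also have "\<dots> = add K (add K (smult K c (brk K t)) (delta1 K ps)) (delta1 K qs)"
    using vs_assoc[OF VK vs_smult[OF VK kd(2)[OF t]] delta1_carrier[OF ps] delta1_carrier[OF Cons(3)]] by simp
  finally show ?case using p by simp
qed

abbreviation "scl a ps \<equiv> map (\<lambda>(c, t). (a * c, t)) ps"
abbreviation "twp ps \<equiv> map (\<lambda>(c, t). (c, twl t)) ps"

lemma psok_scl: "psok ps \<Longrightarrow> psok (scl a ps)"
proof (induction ps)
  case (Cons p ps)
  obtain c t where p: "p = (c, t)" by (cases p)
  thus ?case using Cons by simp
qed simp
lemma psok_twp: "psok ps \<Longrightarrow> psok (twp ps)"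
proof (induction ps)
  case (Cons p ps)
  obtain c t where p: "p = (c, t)" by (cases p)
  thus ?case using Cons tuples_map[of t n "carrier K" "tw K" "carrier K"] kd(5) by simp
qed simp

lemma delta1_scl: "psok ps \<Longrightarrow> delta1 K (scl a ps) = smult K a (delta1 K ps)"
proof (induction ps)
  case Nil thus ?case using VK by simp
next
  case (Cons p ps)
  obtain c t where p: "p = (c, t)" by (cases p)
  thus ?case using Cons delta1_carrier VK kd(2) by (simp add: vs_smult_add vs_smult_smult)
qed

lemma delta1_twp: "psok ps \<Longrightarrow> delta1 K (twp ps) = tw K (delta1 K ps)"
proof (induction ps)
  case Nil thus ?case using tw_zero_K by simp
next
  case (Cons p ps)
  obtain c t where p: "p = (c, t)" by (cases p)
  thus ?case using Cons delta1_carrier VK kd(2) kd(6) kd(7) kd(8) by simp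
qed

lemma formal_scl: "formal (scl a ps) = (\<lambda>s. a * formal ps s)"
  by (induction ps) (auto simp: algebra_simps)

lemma formal_twp: "formal (twp ps) = push twl (formal ps)"
  by (simp add: push_formal case_prod_beta)

lemma formal_single: "formal [(1, t)] = ind t" by (simp add: formal_def)

abbreviation Q1 :: "('k, ('a list \<Rightarrow> 'k) set) hom_nalg" where "Q1 \<equiv> qspace FS R"
abbreviation "cl1 \<equiv> qcl FS R"
abbreviation "tq \<equiv> qmap FS R (push twl)"

lemma VF: "vspace FS" by (rule Fsp_vspace)
lemma VQ1: "vspace Q1" by (rule qspace_vspace[OF VF R_subsp])

lemma cl1_add: "finite (supp f) \<Longrightarrow> finite (supp g) \<Longrightarrow> add Q1 (cl1 f) (cl1 g) = cl1 (\<lambda>t. f t + g t)"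
  using qcl_add[OF VF R_subsp, of f g] by simp
lemma cl1_smult: "finite (supp f) \<Longrightarrow> smult Q1 c (cl1 f) = cl1 (\<lambda>t. c * f t)"
  using qcl_smult[OF VF R_subsp, of f c] by simp
lemma cl1_zero: "cl1 (\<lambda>_. 0) = R"
  using qcl_zero[OF VF R_subsp] by simp
lemma cl1_tw: "finite (supp f) \<Longrightarrow> tq (cl1 f) = cl1 (push twl f)"
  by (rule qmap_cl[OF VF R_subsp]) (use finite_supp_push push_add push_R in auto)
lemma cl1_eq: "finite (supp f) \<Longrightarrow> finite (supp g) \<Longrightarrow> cl1 f = cl1 g \<longleftrightarrow> (\<exists>r\<in>R. f = (\<lambda>t. g t + r t))"
  using qcl_eq[OF VF R_subsp, of f g] by simp
lemma cl1_eq_R: "finite (supp f) \<Longrightarrow> cl1 f = R \<longleftrightarrow> f \<in> R"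
  using qcl_eq_zero[OF VF R_subsp, of f] by simp

definition Ucar :: "('a \<times> ('a list \<Rightarrow> 'k) set) set" where
  "Ucar = {(delta1 K ps, cl1 (formal ps)) | ps. psok ps}"

abbreviation "bU \<equiv> \<lambda>xs. cl1 (ind xs)"

abbreviation U where "U \<equiv> pstruct K Q1 Ucar bU tq"

lemma Ucar_I: "psok ps \<Longrightarrow> (delta1 K ps, cl1 (formal ps)) \<in> Ucar"
  unfolding Ucar_def by blast

lemma Ucar_E: "x \<in> Ucar \<Longrightarrow> (\<And>ps. psok ps \<Longrightarrow> x = (delta1 K ps, cl1 (formal ps)) \<Longrightarrow> P) \<Longrightarrow> P"
  unfolding Ucar_def by blast

lemma cl1_carrier: "finite (supp f) \<Longrightarrow> cl1 f \<in> carrier Q1" by simp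

lemma Ucar_sub: "Ucar \<subseteq> carrier K \<times> carrier Q1"
proof
  fix x assume "x \<in> Ucar"
  then obtain ps where ps: "psok ps" "x = (delta1 K ps, cl1 (formal ps))" by (rule Ucar_E)
  show "x \<in> carrier K \<times> carrier Q1" using ps delta1_carrier[OF ps(1)] cl1_carrier[OF finite_supp_formal]
    by (simp only: mem_Times_iff fst_conv snd_conv)
qed

lemma Ucar_zero: "(zero K, zero Q1) \<in> Ucar"
proof -
  have "(delta1 K [], cl1 (formal [])) \<in> Ucar" by (rule Ucar_I) simp
  thus ?thesis using cl1_zero by simp
qed

lemma Ucar_add: "\<forall>x\<in>Ucar. \<forall>y\<in>Ucar. (add K (fst x) (fst y), add Q1 (snd x) (snd y)) \<in> Ucar"
proof (intro ballI)
  fix x y assume "x \<in> Ucar" "y \<in> Ucar"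
  then obtain ps qs where ps: "psok ps" "x = (delta1 K ps, cl1 (formal ps))"
    and qs: "psok qs" "y = (delta1 K qs, cl1 (formal qs))" by (meson Ucar_E)
  have "(delta1 K (ps @ qs), cl1 (formal (ps @ qs))) \<in> Ucar" by (rule Ucar_I) (simp add: psok_append ps qs)
  moreover have "delta1 K (ps @ qs) = add K (fst x) (fst y)" using delta1_append[OF ps(1) qs(1)] ps qs by simp
  moreover have "cl1 (formal (ps @ qs)) = add Q1 (snd x) (snd y)"
    using cl1_add[OF finite_supp_formal[of ps] finite_supp_formal[of qs]] ps qs unfolding formal_append
    by (simp del: qspace_simps)
  ultimately show "(add K (fst x) (fst y), add Q1 (snd x) (snd y)) \<in> Ucar" by simp
qed

lemma Ucar_smult: "\<forall>c. \<forall>x\<in>Ucar. (smult K c (fst x), smult Q1 c (snd x)) \<in> Ucar"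
proof (intro allI ballI)
  fix c x assume "x \<in> Ucar"
  then obtain ps where ps: "psok ps" "x = (delta1 K ps, cl1 (formal ps))" by (rule Ucar_E)
  have "(delta1 K (scl c ps), cl1 (formal (scl c ps))) \<in> Ucar" by (rule Ucar_I) (simp add: psok_scl ps)
  moreover have "delta1 K (scl c ps) = smult K c (fst x)" using delta1_scl[OF ps(1)] ps by simp
  moreover have "cl1 (formal (scl c ps)) = smult Q1 c (snd x)"
    using cl1_smult[OF finite_supp_formal[of ps], of c] ps unfolding formal_scl
    by (simp del: qspace_simps)
  ultimately show "(smult K c (fst x), smult Q1 c (snd x)) \<in> Ucar" by simp
qed

lemma Ucar_tw: "\<forall>x\<in>Ucar. (tw K (fst x), tq (snd x)) \<in> Ucar"
proof (intro ballI)
  fix x assume "x \<in> Ucar"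
  then obtain ps where ps: "psok ps" "x = (delta1 K ps, cl1 (formal ps))" by (rule Ucar_E)
  have "(delta1 K (twp ps), cl1 (formal (twp ps))) \<in> Ucar" by (rule Ucar_I) (simp add: psok_twp ps)
  moreover have "delta1 K (twp ps) = tw K (fst x)" using delta1_twp[OF ps(1)] ps by simp
  moreover have "cl1 (formal (twp ps)) = tq (snd x)"
    using cl1_tw[OF finite_supp_formal[of ps]] ps unfolding formal_twp by simp
  ultimately show "(tw K (fst x), tq (snd x)) \<in> Ucar" by simp
qed

lemma Ucar_brk_elem: "xs \<in> tuples n (carrier K) \<Longrightarrow> (brk K xs, cl1 (ind xs)) \<in> Ucar"
proof -
  assume xs: "xs \<in> tuples n (carrier K)"
  have "(delta1 K [(1, xs)], cl1 (formal [(1, xs)])) \<in> Ucar" by (rule Ucar_I) (simp add: xs)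
  thus ?thesis using VK kd(2)[OF xs] by (simp add: formal_single)
qed

lemma Ucar_fst: "x \<in> Ucar \<Longrightarrow> fst x \<in> carrier K" using Ucar_sub by auto

lemma Ucar_brk: "\<forall>XS\<in>tuples n Ucar. (brk K (map fst XS), bU (map fst XS)) \<in> Ucar"
  using Ucar_brk_elem map_fst_tuples[OF _ Ucar_sub] by blast

end


context cext
begin

lemma R_add: "f \<in> R \<Longrightarrow> g \<in> R \<Longrightarrow> (\<lambda>t. f t + g t) \<in> R" unfolding R_def by (rule fspan.add)
lemma R_smult: "f \<in> R \<Longrightarrow> (\<lambda>t. c * f t) \<in> R" unfolding R_def by (rule fspan.smult)
lemma R_diff: "f \<in> R \<Longrightarrow> g \<in> R \<Longrightarrow> (\<lambda>t. f t - g t) \<in> R" unfolding R_def by (rule fspan_diff)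
lemma R_sum: "finite I \<Longrightarrow> (\<And>i. i \<in> I \<Longrightarrow> f i \<in> R) \<Longrightarrow> (\<lambda>t. \<Sum>i\<in>I. f i t) \<in> R"
  unfolding R_def by (rule fspan_sum)
lemma R_zero: "(\<lambda>_. 0) \<in> R" unfolding R_def by (rule fspan.zero)

lemma b1: "xs \<in> tuples n (carrier K) \<Longrightarrow> i < n \<Longrightarrow> a \<in> carrier K \<Longrightarrow> b \<in> carrier K \<Longrightarrow>
   bU (xs[i := add K a b]) = add Q1 (bU (xs[i := a])) (bU (xs[i := b]))"
proof -
  assume xs: "xs \<in> tuples n (carrier K)" and i: "i < n" and a: "a \<in> carrier K" and b: "b \<in> carrier K"
  have "add Q1 (bU (xs[i := a])) (bU (xs[i := b])) = cl1 (\<lambda>t. ind (xs[i := a]) t + ind (xs[i := b]) t)"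
    by (rule cl1_add) simp_all
  also have "\<dots> = bU (xs[i := add K a b])"
  proof (subst cl1_eq)
    show "finite (supp (\<lambda>t. ind (xs[i := a]) t + ind (xs[i := b]) t))" by (rule finite_supp_add) simp_all
    show "finite (supp (ind (xs[i := add K a b])))" by simp
    show "\<exists>r\<in>R. (\<lambda>t. ind (xs[i := a]) t + ind (xs[i := b]) t) = (\<lambda>t. ind (xs[i := add K a b]) t + r t)"
      using R_smult[OF rel1_R[OF xs i a b], of "-1"]
      by (intro bexI[where x="\<lambda>t. (-1) * (ind (xs[i := add K a b]) t - ind (xs[i := a]) t - ind (xs[i := b]) t)"])
         (auto simp: algebra_simps)
  qed
  finally show ?thesis ..
qed

lemma b2: "xs \<in> tuples n (carrier K) \<Longrightarrow> i < n \<Longrightarrow> a \<in> carrier K \<Longrightarrow>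
   bU (xs[i := smult K c a]) = smult Q1 c (bU (xs[i := a]))"
proof -
  assume xs: "xs \<in> tuples n (carrier K)" and i: "i < n" and a: "a \<in> carrier K"
  have "smult Q1 c (bU (xs[i := a])) = cl1 (\<lambda>t. c * ind (xs[i := a]) t)"
    by (rule cl1_smult) simp_all
  also have "\<dots> = bU (xs[i := smult K c a])"
  proof (subst cl1_eq)
    show "finite (supp (\<lambda>t. c * ind (xs[i := a]) t))" by (rule finite_supp_smult) simp_all
    show "finite (supp (ind (xs[i := smult K c a])))" by simp
    show "\<exists>r\<in>R. (\<lambda>t. c * ind (xs[i := a]) t) = (\<lambda>t. ind (xs[i := smult K c a]) t + r t)"
      using R_smult[OF rel2_R[OF xs i a, of c], of "-1"]
      by (intro bexI[where x="\<lambda>t. (-1) * (ind (xs[i := smult K c a]) t - c * ind (xs[i := a]) t)"])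
         (auto simp: algebra_simps)
  qed
  finally show ?thesis ..
qed

lemma Q1_elem: "x \<in> carrier Q1 \<Longrightarrow> \<exists>f. finite (supp f) \<and> x = cl1 f" by auto

lemma t1: "x \<in> carrier Q1 \<Longrightarrow> y \<in> carrier Q1 \<Longrightarrow> tq (add Q1 x y) = add Q1 (tq x) (tq y)"
proof -
  assume "x \<in> carrier Q1" "y \<in> carrier Q1"
  then obtain f g where f: "finite (supp f)" "x = cl1 f" and g: "finite (supp g)" "y = cl1 g"
    using Q1_elem by blast
  have fg: "finite (supp (\<lambda>t. f t + g t))" by (rule finite_supp_add[OF f(1) g(1)])
  have "tq (add Q1 x y) = cl1 (push twl (\<lambda>t. f t + g t))"
    unfolding f(2) g(2) cl1_add[OF f(1) g(1)] cl1_tw[OF fg] ..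
  also have "\<dots> = cl1 (\<lambda>s. push twl f s + push twl g s)" unfolding push_add[OF f(1) g(1)] ..
  also have "\<dots> = add Q1 (tq x) (tq y)"
    unfolding f(2) g(2) cl1_tw[OF f(1)] cl1_tw[OF g(1)]
    by (rule cl1_add[symmetric]) (simp_all add: finite_supp_push f g)
  finally show ?thesis .
qed

lemma t2: "x \<in> carrier Q1 \<Longrightarrow> tq (smult Q1 c x) = smult Q1 c (tq x)"
proof -
  assume "x \<in> carrier Q1"
  then obtain f where f: "finite (supp f)" "x = cl1 f" using Q1_elem by blast
  have fc: "finite (supp (\<lambda>t. c * f t))" by (rule finite_supp_smult[OF f(1)])
  have "tq (smult Q1 c x) = cl1 (push twl (\<lambda>t. c * f t))"
    unfolding f(2) cl1_smult[OF f(1)] cl1_tw[OF fc] ..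
  also have "\<dots> = cl1 (\<lambda>s. c * push twl f s)" unfolding push_smult[OF f(1)] ..
  also have "\<dots> = smult Q1 c (tq x)"
    unfolding f(2) cl1_tw[OF f(1)]
    by (rule cl1_smult[symmetric]) (simp_all add: finite_supp_push f)
  finally show ?thesis .
qed

lemma t3: "tq (bU xs) = bU (twl xs)"
  by (simp only: cl1_tw[OF finite_supp_ind] push_ind)

lemma lsum_cl1: "distinct is \<Longrightarrow> (\<And>i. i \<in> set is \<Longrightarrow> finite (supp (g i))) \<Longrightarrow>
   lsum Q1 (map (\<lambda>i. cl1 (g i)) is) = cl1 (\<lambda>t. \<Sum>i\<in>set is. g i t) \<and> finite (supp (\<lambda>t. \<Sum>i\<in>set is. g i t))"
proof (induction "is")
  case Nil thus ?case using cl1_zero by simp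
next
  case (Cons j js)
  have IH: "lsum Q1 (map (\<lambda>i. cl1 (g i)) js) = cl1 (\<lambda>t. \<Sum>i\<in>set js. g i t)"
    "finite (supp (\<lambda>t. \<Sum>i\<in>set js. g i t))" using Cons by auto
  have gj: "finite (supp (g j))" using Cons by simp
  have "lsum Q1 (map (\<lambda>i. cl1 (g i)) (j # js)) = add Q1 (cl1 (g j)) (cl1 (\<lambda>t. \<Sum>i\<in>set js. g i t))"
    using IH(1) by simp
  also have "\<dots> = cl1 (\<lambda>t. g j t + (\<Sum>i\<in>set js. g i t))" by (rule cl1_add[OF gj IH(2)])
  moreover have nj: "j \<notin> set js" using Cons(2) by simp
  ultimately show ?case using finite_supp_add[OF gj IH(2)] by (simp del: qspace_simps)
qed

lemma bl: "xs \<in> tuples n (carrier K) \<Longrightarrow> ys \<in> tuples (n - 1) (carrier K) \<Longrightarrow>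
        bU (brk K xs # map (tw K) ys) =
        lsum Q1 (map (\<lambda>i. bU ((map (tw K) xs)[i := brk K (xs ! i # ys)])) [0..<n])"
proof -
  assume xs: "xs \<in> tuples n (carrier K)" and ys: "ys \<in> tuples (n - 1) (carrier K)"
  let ?B = "\<lambda>i. (map (tw K) xs)[i := brk K (xs ! i # ys)]"
  have "lsum Q1 (map (\<lambda>i. bU (?B i)) [0..<n]) = cl1 (\<lambda>t. \<Sum>i\<in>set [0..<n]. ind (?B i) t)"
    using lsum_cl1[of "[0..<n]" "\<lambda>i. ind (?B i)"] by simp
  also have "\<dots> = cl1 (\<lambda>t. \<Sum>i<n. ind (?B i) t)" by (simp add: atLeast0LessThan)
  also have "\<dots> = bU (brk K xs # map (tw K) ys)"
  proof (subst cl1_eq)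
    show "finite (supp (\<lambda>t. \<Sum>i<n. ind (?B i) t))" by (rule finite_supp_sum) simp_all
    show "finite (supp (ind (brk K xs # map (tw K) ys)))" by simp
    show "\<exists>r\<in>R. (\<lambda>t. \<Sum>i<n. ind (?B i) t) = (\<lambda>t. ind (brk K xs # map (tw K) ys) t + r t)"
      using R_smult[OF d2_R[OF xs ys], of "-1"]
      by (intro bexI[where x="\<lambda>t. (-1) * delta2_pure n K xs ys t"]) (auto simp: delta2_pure_def)
  qed
  finally show ?thesis ..
qed

lemma D_delta1: "x \<in> D \<Longrightarrow> \<exists>ps. psok ps \<and> delta1 K ps = x"
  unfolding derived_def
proof (induction rule: vspan.induct)
  case zero thus ?case by (intro exI[where x="[]"]) simp
next
  case (gen x)
  then obtain t where t: "t \<in> tuples n (carrier K)" "x = brk K t" by blast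
  thus ?case using VK kd(2)[OF t(1)] by (intro exI[where x="[(1, t)]"]) simp
next
  case (add x y)
  then obtain ps qs where "psok ps" "delta1 K ps = x" "psok qs" "delta1 K qs = y" by blast
  thus ?case using delta1_append psok_append by (intro exI[where x="ps @ qs"]) simp
next
  case (smult x c)
  then obtain ps where "psok ps" "delta1 K ps = x" by blast
  thus ?case using delta1_scl psok_scl by (intro exI[where x="scl c ps"]) simp
qed

end


context cext
begin

lemma zero_lem: "ys \<in> tuples n (carrier K) \<Longrightarrow> i < n \<Longrightarrow> ind (ys[i := zero K]) \<in> R"
proof -
  assume ys: "ys \<in> tuples n (carrier K)" and i: "i < n"
  have eqz: "add K (zero K) (zero K) = zero K" using VK by simp
  have "(\<lambda>t. (-1) * (ind (ys[i := zero K]) t - ind (ys[i := zero K]) t - ind (ys[i := zero K]) t)) \<in> R"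
    using R_smult[OF rel1_R[OF ys i vs_zero[OF VK] vs_zero[OF VK]], of "-1"] unfolding eqz .
  moreover have "(\<lambda>t. (-1) * (ind (ys[i := zero K]) t - ind (ys[i := zero K]) t - ind (ys[i := zero K]) t))
     = ind (ys[i := zero K])" by (rule ext) simp
  ultimately show ?thesis by simp
qed

lemma alpha_tuples:
  assumes "length xs = n" "i < n" "xs ! i \<in> carrier K" "\<forall>j<n. j \<noteq> i \<longrightarrow> xs ! j \<in> tw K ` kernel K L \<pi>"
  shows "xs \<in> tuples n (carrier K)"
proof (rule tuplesI)
  show "length xs = n" by fact
  show "set xs \<subseteq> carrier K"
  proof
    fix x assume "x \<in> set xs"
    then obtain k where k: "k < n" "xs ! k = x" using assms(1) by (auto simp: in_set_conv_nth)
    show "x \<in> carrier K"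
    proof (cases "k = i")
      case True thus ?thesis using k assms(3) by simp
    next
      case False
      then obtain m where "m \<in> kernel K L \<pi>" "xs ! k = tw K m" using k(1) assms(4) by blast
      thus ?thesis using k(2) kd(5) kerC by simp
    qed
  qed
qed

lemma cenC: "x \<in> center n K \<Longrightarrow> x \<in> carrier K" by (simp add: center_def)

lemma ind_alpha:
  assumes perf: "carrier K \<subseteq> D"
    and xs: "length xs = n" "i < n" "xs ! i \<in> carrier K" "\<forall>j<n. j \<noteq> i \<longrightarrow> xs ! j \<in> tw K ` kernel K L \<pi>"
  shows "ind xs \<in> R"
proof -
  have xsT: "xs \<in> tuples n (carrier K)" by (rule alpha_tuples[OF xs])
  define m where "m j = (SOME k. k \<in> kernel K L \<pi> \<and> xs ! j = tw K k)" for j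
  have mj: "\<And>j. j < n \<Longrightarrow> j \<noteq> i \<Longrightarrow> m j \<in> kernel K L \<pi> \<and> xs ! j = tw K (m j)"
  proof -
    fix j assume "j < n" "j \<noteq> i"
    hence "\<exists>k. k \<in> kernel K L \<pi> \<and> xs ! j = tw K k" using xs(4) by blast
    thus "m j \<in> kernel K L \<pi> \<and> xs ! j = tw K (m j)" unfolding m_def by (rule someI_ex)
  qed
  have mC: "\<And>j. j < n \<Longrightarrow> j \<noteq> i \<Longrightarrow> m j \<in> center n K" using mj cen by blast
  have mK: "\<And>j. j < n \<Longrightarrow> j \<noteq> i \<Longrightarrow> m j \<in> carrier K" using mj kerC by blast
  have n1: "1 < n" using n2 by simp
  have claim: "x \<in> D \<Longrightarrow> ind (xs[i := x]) \<in> R" for x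
    unfolding derived_def
  proof (induction rule: vspan.induct)
    case zero show ?case by (rule zero_lem[OF xsT xs(2)])
  next
    case (add a b)
    have ab: "a \<in> carrier K" "b \<in> carrier K" using add(1,2) D_induct_carrier by blast+
    have "(\<lambda>t. (ind (xs[i := add K a b]) t - ind (xs[i := a]) t - ind (xs[i := b]) t) + (ind (xs[i := a]) t + ind (xs[i := b]) t)) \<in> R"
      by (rule R_add[OF rel1_R[OF xsT xs(2) ab] R_add[OF add(3,4)]])
    thus ?case by simp
  next
    case (smult a c)
    have a: "a \<in> carrier K" using smult(1) D_induct_carrier by blast
    have "(\<lambda>t. (ind (xs[i := smult K c a]) t - c * ind (xs[i := a]) t) + c * ind (xs[i := a]) t) \<in> R"
      by (rule R_add[OF rel2_R[OF xsT xs(2) a] R_smult[OF smult(2)]])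
    thus ?case by simp
  next
    case (gen x)
    then obtain ks where ks: "ks \<in> tuples n (carrier K)" "x = brk K ks" by blast
    have lks: "length ks = n" using ks(1) by (simp add: tuples_def)
    show ?case
    proof (cases "i = 0")
      case True
      define ys where "ys = map m [1..<n]"
      have ysT: "ys \<in> tuples (n - 1) (carrier K)"
        unfolding ys_def using mK True by (auto simp: tuples_def)
      have eq: "xs[i := brk K ks] = brk K ks # twl ys"
      proof (rule nth_equalityI)
        show "length (xs[i := brk K ks]) = length (brk K ks # twl ys)" using xs(1) n1 by (simp add: ys_def)
        fix k assume "k < length (xs[i := brk K ks])"
        hence k: "k < n" using xs(1) by simp
        show "xs[i := brk K ks] ! k = (brk K ks # twl ys) ! k"
        proof (cases k)
          case 0 thus ?thesis using True xs(1) k by simp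
        next
          case (Suc k')
          hence "xs ! k = tw K (m k)" using mj[of k] k True by simp
          thus ?thesis using Suc True k by (simp add: ys_def)
        qed
      qed
      have z: "\<And>j. j < n \<Longrightarrow> brk K (ks ! j # ys) = zero K"
      proof -
        fix j assume j: "j < n"
        have T: "ks ! j # ys \<in> tuples n (carrier K)"
          using tuples_nth[OF ks(1) j] ysT n1 by (auto simp: tuples_def)
        have "(ks ! j # ys) ! 1 = m 1" using n1 by (simp add: ys_def)
        hence "(ks ! j # ys) ! 1 \<in> center n K" using mC[of 1] n1 True by simp
        thus "brk K (ks ! j # ys) = zero K" by (rule brk_center[OF T n1])
      qed
      have terms: "\<And>j. j \<in> {..<n} \<Longrightarrow> ind ((twl ks)[j := brk K (ks ! j # ys)]) \<in> R"
        using zero_lem[OF tuples_map[OF ks(1) kd(5)]] z by simp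
      have "(\<lambda>t. delta2_pure n K ks ys t + (\<Sum>j<n. ind ((twl ks)[j := brk K (ks ! j # ys)]) t)) \<in> R"
        by (rule R_add[OF d2_R[OF ks(1) ysT] R_sum[OF finite_lessThan terms]])
      moreover have "(\<lambda>t. delta2_pure n K ks ys t + (\<Sum>j<n. ind ((twl ks)[j := brk K (ks ! j # ys)]) t))
          = ind (brk K ks # twl ys)" by (simp add: delta2_pure_def)
      ultimately show ?thesis using eq ks(2) by simp
    next
      case False
      define X where "X = (map m [0..<n])[i := ks ! 0]"
      define Y where "Y = tl ks"
      have ks0: "ks ! 0 \<in> carrier K" using tuples_nth[OF ks(1)] n1 by simp
      have lX: "length X = n" by (simp add: X_def)
      have Xi: "X ! i = ks ! 0" using xs(2) by (simp add: X_def)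
      have Xj: "\<And>j. j < n \<Longrightarrow> j \<noteq> i \<Longrightarrow> X ! j = m j" by (simp add: X_def)
      have XT: "X \<in> tuples n (carrier K)"
      proof (rule tuplesI[OF lX], rule subsetI)
        fix x assume "x \<in> set X"
        then obtain k where k: "k < n" "X ! k = x" using lX by (auto simp: in_set_conv_nth)
        show "x \<in> carrier K" using k Xi Xj mK ks0 by (cases "k = i") auto
      qed
      have ksY: "ks = ks ! 0 # Y" unfolding Y_def using lks n1
        by (metis hd_Cons_tl hd_conv_nth list.size(3) not_less0 less_trans zero_less_one)
      have YT: "Y \<in> tuples (n - 1) (carrier K)"
      proof -
        have "ks ! 0 # Y \<in> tuples (Suc (n - 1)) (carrier K)" using ks(1) ksY n1 by simp
        thus ?thesis unfolding tuples_Cons by simp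
      qed
      have bX: "brk K X = zero K"
        using brk_center[OF XT, of 0] Xj[of 0] mC[of 0] False n1 by simp
      have zj: "\<And>j. j < n \<Longrightarrow> j \<noteq> i \<Longrightarrow> brk K (X ! j # Y) = zero K"
      proof -
        fix j assume j: "j < n" "j \<noteq> i"
        have T: "X ! j # Y \<in> tuples n (carrier K)" using tuples_nth[OF XT j(1)] YT n1 by (auto simp: tuples_def)
        show "brk K (X ! j # Y) = zero K" using brk_center[OF T, of 0] Xj[OF j] mC[OF j] n1 by simp
      qed
      have twX: "(twl X)[i := brk K ks] = xs[i := brk K ks]"
      proof (rule nth_equalityI)
        show "length ((twl X)[i := brk K ks]) = length (xs[i := brk K ks])" using lX xs(1) by simp
        fix k assume "k < length ((twl X)[i := brk K ks])"
        hence k: "k < n" using lX by simp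
        show "(twl X)[i := brk K ks] ! k = xs[i := brk K ks] ! k"
          using k Xj[OF k] mj[OF k] lX xs(1) by (cases "k = i") auto
      qed
      have Ti: "(twl X)[i := brk K (X ! i # Y)] = xs[i := brk K ks]" using Xi ksY twX by simp
      let ?T = "\<lambda>j. ind ((twl X)[j := brk K (X ! j # Y)])"
      have others: "\<And>j. j \<in> {..<n} - {i} \<Longrightarrow> ?T j \<in> R"
        using zero_lem[OF tuples_map[OF XT kd(5)]] zj by auto
      have first: "ind (brk K X # twl Y) \<in> R"
      proof -
        have T: "zero K # twl Y \<in> tuples n (carrier K)" using tuples_map[OF YT kd(5)] n1 VK
          by (auto simp: tuples_def)
        show ?thesis using zero_lem[OF T, of 0] bX n1 by simp
      qed
      have sumsplit: "\<And>t. (\<Sum>j<n. ?T j t) = ?T i t + (\<Sum>j\<in>{..<n} - {i}. ?T j t)"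
        using xs(2) by (subst sum.remove[of "{..<n}" i]) auto
      have "(\<lambda>t. ind (brk K X # twl Y) t - delta2_pure n K X Y t - (\<Sum>j\<in>{..<n} - {i}. ?T j t)) \<in> R"
        by (rule R_diff[OF R_diff[OF first d2_R[OF XT YT]] R_sum]) (use others in auto)
      moreover have "(\<lambda>t. ind (brk K X # twl Y) t - delta2_pure n K X Y t - (\<Sum>j\<in>{..<n} - {i}. ?T j t))
         = ?T i" by (rule ext) (simp add: delta2_pure_def sumsplit)
      ultimately show ?thesis using Ti ks(2) by simp
    qed
  qed
  have "xs ! i \<in> D" using perf xs(3) by blast
  from claim[OF this] show ?thesis by simp
qed

end


definition shiftf :: "('a list \<Rightarrow> 'k::field) \<Rightarrow> 'a list \<Rightarrow> 'k" where
  "shiftf g s = (case s of [] \<Rightarrow> 0 | _ # s' \<Rightarrow> g s')"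

definition enc1 :: "'a \<times> ('a list \<Rightarrow> 'k::field) set \<Rightarrow> ('a list \<Rightarrow> 'k) set" where
  "enc1 p = insert (tag (fst p)) (shiftf ` snd p)"

lemma shiftf_inj: "inj (shiftf :: ('a list \<Rightarrow> 'k::field) \<Rightarrow> 'a list \<Rightarrow> 'k)"
proof (rule injI)
  fix f g :: "'a list \<Rightarrow> 'k::field" assume "shiftf f = shiftf g"
  hence "\<And>s. shiftf f (undefined # s) = shiftf g (undefined # s)" by simp
  thus "f = g" by (auto simp: shiftf_def)
qed

lemma enc1_inj: "inj (enc1 :: 'a \<times> ('a list \<Rightarrow> 'k::field) set \<Rightarrow> ('a list \<Rightarrow> 'k) set)"
proof (rule injI)
  fix p q :: "'a \<times> ('a list \<Rightarrow> 'k) set"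
  assume E: "enc1 p = enc1 q"
  have tg: "\<And>x. (tag x :: 'a list \<Rightarrow> 'k) [] = 1" by (simp add: tag_def ind_def)
  have ig: "\<And>g. (shiftf g :: 'a list \<Rightarrow> 'k) [] = 0" by (simp add: shiftf_def)
  have A: "\<And>p. {f \<in> (enc1 p :: ('a list \<Rightarrow> 'k) set). f [] \<noteq> 0} = {tag (fst p)}"
    unfolding enc1_def using tg ig by auto
  have B: "\<And>p. {f \<in> (enc1 p :: ('a list \<Rightarrow> 'k) set). f [] = 0} = shiftf ` snd p"
    unfolding enc1_def using tg ig by auto
  have "(tag (fst p) :: 'a list \<Rightarrow> 'k) = tag (fst q)" using A[of p] A[of q] E by auto
  hence "(tag (fst p) :: 'a list \<Rightarrow> 'k) [fst p] = tag (fst q) [fst p]" by simp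
  hence 1: "fst p = fst q" by (auto simp: tag_def ind_def split: if_splits)
  have "(shiftf ` snd p :: ('a list \<Rightarrow> 'k) set) = shiftf ` snd q" using B[of p] B[of q] E by auto
  hence 2: "snd p = snd q" using inj_image_eq_iff[OF shiftf_inj] by blast
  show "p = q" using 1 2 by (simp add: prod_eq_iff)
qed

definition enc2 :: "'a \<Rightarrow> ('a list \<Rightarrow> 'k::field) set" where "enc2 x = {ind [x]}"

lemma enc2_inj: "inj (enc2 :: 'a \<Rightarrow> ('a list \<Rightarrow> 'k::field) set)"
  by (rule injI) (simp add: enc2_def ind_inj)

context cext
begin

lemma hom_id: "hom n K K id" by (rule homI) simp_all

lemma HL1:
  assumes U: "universal_alpha_central_extension n K L \<pi>"
  shows "HL1_zero n K"
proof -
  have perf: "carrier K \<subseteq> D" by (rule HL0[OF U])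
  have surj: "\<And>x. x \<in> carrier K \<Longrightarrow> \<exists>w. (x, w) \<in> Ucar"
  proof -
    fix x assume "x \<in> carrier K"
    then obtain ps where "psok ps" "delta1 K ps = x" using perf D_delta1 by blast
    thus "\<exists>w. (x, w) \<in> Ucar" using Ucar_I by blast
  qed
  have bz: "\<And>xs i. length xs = n \<Longrightarrow> i < n \<Longrightarrow> xs ! i \<in> carrier K \<Longrightarrow>
        (\<forall>j<n. j \<noteq> i \<longrightarrow> xs ! j \<in> tw K ` kernel K L \<pi>) \<Longrightarrow> bU xs = zero Q1"
    using ind_alpha[OF perf] cl1_eq_R[OF finite_supp_ind] by simp
  have ace: "alpha_central_extension n U L (\<pi> \<circ> fst)"
    by (rule prod_ace[OF VQ1 Ucar_sub Ucar_zero Ucar_add Ucar_smult Ucar_tw Ucar_brk b1 b2 t1 t2 t3 bl surj bz])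
  have HU: "hom_leibniz_nalg n U" using ace unfolding alpha_central_extension_def extension_def by blast
  have VU: "vspace U" using hlD(1)[OF HU] .
  have inj1: "inj_on (enc1 :: 'a \<times> ('a list \<Rightarrow> 'k) set \<Rightarrow> ('a list \<Rightarrow> 'k) set) (carrier U)"
    using enc1_inj by (blast intro: inj_on_subset)
  obtain h where h: "hom n K U h" "\<forall>x\<in>carrier K. (\<pi> \<circ> fst) (h x) = \<pi> x"
    using univ_use(1)[OF U ace inj1] by blast
  note hd = homD[OF h(1)]
  have hC: "\<And>x. x \<in> carrier K \<Longrightarrow> h x \<in> Ucar" using hd(1) by simp
  have g: "hom n K K (fst \<circ> h)"
  proof (rule homI)
    show "\<And>x. x \<in> carrier K \<Longrightarrow> (fst \<circ> h) x \<in> carrier K" using hC Ucar_fst by simp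
    show "\<And>x y. x \<in> carrier K \<Longrightarrow> y \<in> carrier K \<Longrightarrow> (fst \<circ> h) (add K x y) = add K ((fst \<circ> h) x) ((fst \<circ> h) y)"
      using hd(2) by simp
    show "\<And>c x. x \<in> carrier K \<Longrightarrow> (fst \<circ> h) (smult K c x) = smult K c ((fst \<circ> h) x)" using hd(3) by simp
    show "\<And>xs. xs \<in> tuples n (carrier K) \<Longrightarrow> (fst \<circ> h) (brk K xs) = brk K (map (fst \<circ> h) xs)"
      using hd(4) by simp
    show "\<And>x. x \<in> carrier K \<Longrightarrow> (fst \<circ> h) (tw K x) = tw K ((fst \<circ> h) x)" using hd(5) by simp
  qed
  have inj2: "inj_on (enc2 :: 'a \<Rightarrow> ('a list \<Rightarrow> 'k) set) (carrier K)"
    using enc2_inj by (blast intro: inj_on_subset)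
  have fh: "\<forall>x\<in>carrier K. id x = (fst \<circ> h) x"
    by (rule univ_use(2)[OF U K_ace inj2 hom_id _ g]) (use h(2) in auto)
  hence fh': "\<And>x. x \<in> carrier K \<Longrightarrow> fst (h x) = x" by simp
  have hbrk: "\<And>t. t \<in> tuples n (carrier K) \<Longrightarrow> h (brk K t) = (brk K t, cl1 (ind t))"
  proof -
    fix t assume t: "t \<in> tuples n (carrier K)"
    have "map (fst \<circ> h) t = t"
    proof (rule map_idI)
      fix x assume "x \<in> set t" thus "(fst \<circ> h) x = x" using fh' t by (auto simp: tuples_def)
    qed
    thus "h (brk K t) = (brk K t, cl1 (ind t))" using hd(4)[OF t] by simp
  qed
  have hps: "\<And>ps. psok ps \<Longrightarrow> h (delta1 K ps) = (delta1 K ps, cl1 (formal ps))"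
  proof -
    fix ps show "psok ps \<Longrightarrow> h (delta1 K ps) = (delta1 K ps, cl1 (formal ps))"
    proof (induction ps)
      case Nil
      have "h (zero K) = zero U" by (rule hom_zero[OF VK VU h(1)])
      thus ?case using cl1_zero by simp
    next
      case (Cons p ps)
      obtain c t where p: "p = (c, t)" by (cases p)
      have t: "t \<in> tuples n (carrier K)" and ps: "psok ps" using Cons(2) p by auto
      have bc: "brk K t \<in> carrier K" using kd(2)[OF t] .
      have "h (delta1 K (p # ps)) = add U (smult U c (h (brk K t))) (h (delta1 K ps))"
        using p hd(2)[OF vs_smult[OF VK bc] delta1_carrier[OF ps]] hd(3)[OF bc] by simp
      also have "\<dots> = (add K (smult K c (brk K t)) (delta1 K ps), add Q1 (smult Q1 c (cl1 (ind t))) (cl1 (formal ps)))"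
        using hbrk[OF t] Cons(1)[OF ps] by (simp del: qspace_simps)
      also have "add Q1 (smult Q1 c (cl1 (ind t))) (cl1 (formal ps)) = cl1 (formal (p # ps))"
        using cl1_smult[OF finite_supp_ind[of t], of c] cl1_add[OF finite_supp_smult[OF finite_supp_ind[of t]] finite_supp_formal[of ps]] p
        by (simp del: qspace_simps)
      finally show ?case using p by simp
    qed
  qed
  show ?thesis unfolding HL1_zero_def
  proof (intro allI impI)
    fix ps :: "('k \<times> 'a list) list"
    assume H: "(\<forall>(c, t)\<in>set ps. t \<in> tuples n (carrier K)) \<and> delta1 K ps = zero K"
    have ps: "psok ps" using H unfolding psok_def by blast
    have "h (zero K) = zero U" by (rule hom_zero[OF VK VU h(1)])
    hence "cl1 (formal ps) = R" using hps[OF ps] H by simp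
    thus "formal ps \<in> fspan (delta2_image n K \<union> tensor_rels n K)"
      using cl1_eq_R[OF finite_supp_formal] unfolding R_def by simp
  qed
qed

end


theorem theorem3p11:
  fixes K :: "('k::field, 'a) hom_nalg" and L :: "('k, 'b) hom_nalg" and \<pi> :: "'a \<Rightarrow> 'b"
  assumes "n \<ge> 2"
    and "universal_alpha_central_extension n K L \<pi>"
  shows "HL0_zero n K \<and> HL1_zero n K"
proof -
  have CE: "central_extension n K L \<pi>"
    using assms(2) unfolding universal_alpha_central_extension_def by blast
  interpret cext n K L \<pi> by unfold_locales (use assms(1) CE in auto)
  show ?thesis using HL0[OF assms(2)] HL1[OF assms(2)] unfolding HL0_zero_def by simp
qed

end
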